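(* Let $n\ge1$, $0\le s\le n$, and let $\mathfrak{g}$ be of type $B_n$. Then \[ \widetilde{\operatorname{ps}}(\omega_n+\widetilde\omega_s)=\frac{\operatorname{Cat}_{(2n+1-s,s)}(q)}{q^{n+1-s}+1}\prod_{k=1}^{n+1}(q^k+1). \]
   Context: For type $B_n$: $\omega_i=\epsilon_1+\cdots+\epsilon_i$ ($i<n$), $\omega_n=\tfrac12(\epsilon_1+\cdots+\epsilon_n)$, $\widetilde\omega_0=0$, $\widetilde\omega_i=\omega_i$ ($1\le i<n$), $\widetilde\omega_n=2\omega_n$. The character $\operatorname{ch}V(\lambda)=\sum_\mu\dim V(\lambda)_\mu x_1^{\mu_1}\cdots x_n^{\mu_n}$; the principal specialization $\operatorname{ps}(\lambda)$ is obtained by substituting $x_i=q^i$ (giving a Laurent polynomial in $q^{1/2}$), and $\widetilde{\operatorname{ps}}(\lambda)=q^{-\eta}\operatorname{ps}(\lambda)$ where $\eta$ is the lowest exponent of $q$ occurring in $\operatorname{ps}(\lambda)$. The $q$-Catalan triangle number is $\operatorname{Cat}_{(a,k)}(q)=\frac{[a+k]_q!\,[a-k+1]_q}{[k]_q!\,[a+1]_q!}$, with $[j]_q=1+q+\cdots+q^{j-1}$ and $[j]_q!=[1]_q\cdots[j]_q$. *)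

theory Defs
  imports Complex_Main "HOL-Combinatorics.Permutations"
begin

text \<open>Weights are encoded in DOUBLED epsilon-coordinates:
  a weight mu = sum_i mu_i eps_i (mu_i in (1/2)Z) is represented by the
  function d :: nat => int with d i = 2 mu_i for 1 <= i <= n and d i = 0
  otherwise.\<close>

definition wvec :: "nat \<Rightarrow> (nat \<Rightarrow> int) set" where
  "wvec n = {v. \<forall>i. i \<notin> {1..n} \<longrightarrow> v i = 0}"

definition eps2 :: "nat \<Rightarrow> nat \<Rightarrow> int" where
  "eps2 i = (\<lambda>j. if j = i then 2 else 0)"

definition posroots :: "nat \<Rightarrow> (nat \<Rightarrow> int) set" where
  "posroots n =
     {(\<lambda>k. eps2 i k - eps2 j k) | i j. 1 \<le> i \<and> i < j \<and> j \<le> n}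
   \<union> {(\<lambda>k. eps2 i k + eps2 j k) | i j. 1 \<le> i \<and> i < j \<and> j \<le> n}
   \<union> {eps2 i | i. 1 \<le> i \<and> i \<le> n}"

text \<open>Half-sum of positive roots rho = sum_i (n - i + 1/2) eps_i (doubled).\<close>
definition rho2 :: "nat \<Rightarrow> nat \<Rightarrow> int" where
  "rho2 n i = (if 1 \<le> i \<and> i \<le> n then 2 * (int n - int i) + 1 else 0)"

definition kostant :: "nat \<Rightarrow> (nat \<Rightarrow> int) \<Rightarrow> nat" where
  "kostant n nu = card {c :: (nat \<Rightarrow> int) \<Rightarrow> nat.
      (\<forall>a. a \<notin> posroots n \<longrightarrow> c a = 0) \<and>
      (\<lambda>k. \<Sum>a\<in>posroots n. int (c a) * a k) = nu}"

text \<open>Weyl group of B_n = signed permutations: (sigma, F) acts by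
  v |-> (i |-> (if i in F then -1 else 1) * v (sigma i)); its sign
  (determinant) is sign sigma * (-1)^card F.\<close>
definition weylB :: "nat \<Rightarrow> ((nat \<Rightarrow> nat) \<times> nat set) set" where
  "weylB n = {(\<sigma>, F). \<sigma> permutes {1..n} \<and> F \<subseteq> {1..n}}"

definition wact :: "(nat \<Rightarrow> nat) \<times> nat set \<Rightarrow> (nat \<Rightarrow> int) \<Rightarrow> nat \<Rightarrow> int" where
  "wact w v = (\<lambda>i. (if i \<in> snd w then -1 else 1) * v (fst w i))"

definition wsgn :: "(nat \<Rightarrow> nat) \<times> nat set \<Rightarrow> int" where
  "wsgn w = sign (fst w) * (-1) ^ card (snd w)"

text \<open>Weight multiplicity dim V(lambda)_mu (Kostant's multiplicity formula).\<close>
definition wmult :: "nat \<Rightarrow> (nat \<Rightarrow> int) \<Rightarrow> (nat \<Rightarrow> int) \<Rightarrow> int" where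
  "wmult n lam mu = (\<Sum>w\<in>weylB n. wsgn w *
      int (kostant n (\<lambda>k. wact w (\<lambda>i. lam i + rho2 n i) k - (mu k + rho2 n k))))"

text \<open>Principal specialization x_i = q^i: ps(lambda) = sum_e psc e q^(e/2),
  where psc e collects the multiplicities of all weights mu with
  sum_i i*(2 mu_i) = e.\<close>
definition psc :: "nat \<Rightarrow> (nat \<Rightarrow> int) \<Rightarrow> int \<Rightarrow> int" where
  "psc n lam e = (\<Sum>mu\<in>{mu \<in> wvec n. wmult n lam mu \<noteq> 0 \<and>
                        (\<Sum>i=1..n. int i * mu i) = e}. wmult n lam mu)"

text \<open>Twice the lowest exponent eta of q occurring in ps(lambda).\<close>
definition eta2 :: "nat \<Rightarrow> (nat \<Rightarrow> int) \<Rightarrow> int" where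
  "eta2 n lam = Min {e. psc n lam e \<noteq> 0}"

text \<open>Normalized principal specialization q^(-eta) ps(lambda), evaluated at q > 0.\<close>
definition tps :: "nat \<Rightarrow> (nat \<Rightarrow> int) \<Rightarrow> real \<Rightarrow> real" where
  "tps n lam q = (\<Sum>e\<in>{e. psc n lam e \<noteq> 0}.
       of_int (psc n lam e) * q powr (of_int (e - eta2 n lam) / 2))"

definition omega2 :: "nat \<Rightarrow> nat \<Rightarrow> nat \<Rightarrow> int" where
  "omega2 n i = (\<lambda>j. if 1 \<le> j \<and> j \<le> n then
                      (if i < n then (if j \<le> i then 2 else 0) else 1) else 0)"

definition omegat2 :: "nat \<Rightarrow> nat \<Rightarrow> nat \<Rightarrow> int" where
  "omegat2 n s = (if s = 0 then (\<lambda>_. 0) else if s < n then omega2 n s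
                  else (\<lambda>j. 2 * omega2 n n j))"

definition qint :: "nat \<Rightarrow> real \<Rightarrow> real" where
  "qint j q = (\<Sum>i<j. q ^ i)"

definition qfact :: "nat \<Rightarrow> real \<Rightarrow> real" where
  "qfact j q = (\<Prod>i=1..j. qint i q)"

definition qcat :: "nat \<Rightarrow> nat \<Rightarrow> real \<Rightarrow> real" where
  "qcat a k q = qfact (a + k) q * qint (a - k + 1) q / (qfact k q * qfact (a + 1) q)"

end

theory Submission
  imports Defs "Jordan_Normal_Form.Determinant" "HOL-Computational_Algebra.Polynomial"
begin

section \<open>Laurent polynomial uniqueness in one variable\<close>

lemma laurent_zero:
  fixes a :: "int \<Rightarrow> real"
  assumes fin: "finite E" and z: "\<forall>t>1. (\<Sum>e\<in>E. a e * t powi e) = 0" and e0: "e0 \<in> E"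
  shows "a e0 = 0"
proof -
  define L where "L = (\<Sum>e\<in>E. \<bar>e\<bar>)"
  have L: "e + L \<ge> 0" if "e \<in> E" for e
  proof -
    have "\<bar>e\<bar> \<le> L" unfolding L_def using fin that by (intro member_le_sum) auto
    thus ?thesis by linarith
  qed
  define p where "p = (\<Sum>e\<in>E. monom (a e) (nat (e + L)))"
  have pt: "poly p t = t powi L * (\<Sum>e\<in>E. a e * t powi e)" if "t > 1" for t :: real
  proof -
    have "poly p t = (\<Sum>e\<in>E. a e * t ^ nat (e + L))"
      unfolding p_def by (simp add: poly_sum poly_monom)
    also have "\<dots> = (\<Sum>e\<in>E. t powi L * (a e * t powi e))"
    proof (rule sum.cong[OF refl])
      fix e assume "e \<in> E"
      hence "t ^ nat (e + L) = t powi (e + L)"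
        using L by (simp add: power_int_def)
      also have "\<dots> = t powi e * t powi L" using that by (simp add: power_int_add)
      finally show "a e * t ^ nat (e + L) = t powi L * (a e * t powi e)" by simp
    qed
    also have "\<dots> = t powi L * (\<Sum>e\<in>E. a e * t powi e)" by (simp add: sum_distrib_left)
    finally show ?thesis .
  qed
  have "p = 0"
  proof (rule ccontr)
    assume "p \<noteq> 0"
    hence "finite {x. poly p x = 0}" by (rule poly_roots_finite)
    moreover have "{1<..2::real} \<subseteq> {x. poly p x = 0}" using pt z by auto
    ultimately have "finite {1<..2::real}" by (rule finite_subset[rotated])
    thus False using infinite_Ioc[of "1::real" 2] by simp
  qed
  have "coeff p (nat (e0 + L)) = (\<Sum>e\<in>E. if nat (e + L) = nat (e0 + L) then a e else 0)"
    unfolding p_def by (simp add: coeff_sum coeff_monom eq_commute)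
  also have "\<dots> = (\<Sum>e\<in>E. if e = e0 then a e else 0)"
    by (rule sum.cong[OF refl]) (use L e0 in \<open>auto simp: nat_eq_iff2\<close>)
  also have "\<dots> = a e0" using fin e0 by simp
  finally show ?thesis using \<open>p = 0\<close> by simp
qed

lemma laurent_eq:
  fixes a b :: "int \<Rightarrow> real"
  assumes "finite E" "finite E'"
    and eq: "\<forall>t>1. (\<Sum>e\<in>E. a e * t powi e) = (\<Sum>e\<in>E'. b e * t powi e)"
  shows "(if e \<in> E then a e else 0) = (if e \<in> E' then b e else 0)"
proof -
  define c where "c e = (if e \<in> E then a e else 0) - (if e \<in> E' then b e else 0)" for e
  have cz: "\<forall>t>1. (\<Sum>e\<in>E \<union> E'. c e * t powi e) = 0"
  proof (intro allI impI)
    fix t :: real assume "t > 1"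
    have "(\<Sum>e\<in>E \<union> E'. c e * t powi e) = (\<Sum>e\<in>E \<union> E'. (if e \<in> E then a e * t powi e else 0))
        - (\<Sum>e\<in>E \<union> E'. (if e \<in> E' then b e * t powi e else 0))"
      unfolding c_def sum_subtractf[symmetric] by (rule sum.cong) (auto simp: algebra_simps)
    also have "(\<Sum>e\<in>E \<union> E'. (if e \<in> E then a e * t powi e else 0)) = (\<Sum>e\<in>E. a e * t powi e)"
      using assms(1,2) by (simp add: sum.If_cases Int_absorb1)
    also have "(\<Sum>e\<in>E \<union> E'. (if e \<in> E' then b e * t powi e else 0)) = (\<Sum>e\<in>E'. b e * t powi e)"
      using assms(1,2) by (simp add: sum.If_cases Int_absorb1)
    finally show "(\<Sum>e\<in>E \<union> E'. c e * t powi e) = 0" using eq \<open>t > 1\<close> by simp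
  qed
  show ?thesis
  proof (cases "e \<in> E \<union> E'")
    case True
    have "c e = 0"
      by (rule laurent_zero[of "E \<union> E'"]) (use assms(1,2) cz True in auto)
    thus ?thesis unfolding c_def by simp
  next
    case False thus ?thesis by auto
  qed
qed

section \<open>Chebyshev polynomials of the second kind\<close>

fun U :: "nat \<Rightarrow> real poly" where
  "U 0 = 1"
| "U (Suc 0) = [:0, 1:]"
| "U (Suc (Suc k)) = pCons 0 (U (Suc k)) - U k"

lemma U_coeff: "coeff (U k) k = 1 \<and> (\<forall>j>k. coeff (U k) j = 0)"
proof (induction k rule: U.induct)
  case 1 thus ?case by (auto simp: coeff_1)
next
  case 2 thus ?case by (auto simp: coeff_pCons split: nat.splits)
next
  case (3 k)
  show ?case
  proof (intro conjI allI impI)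
    show "coeff (U (Suc (Suc k))) (Suc (Suc k)) = 1"
      using 3 by simp
    fix j assume "j > Suc (Suc k)"
    then obtain j' where "j = Suc j'" "j' > Suc k" by (cases j) auto
    thus "coeff (U (Suc (Suc k))) j = 0" using 3 by simp
  qed
qed

lemma U_degree: "degree (U k) = k"
proof -
  have "coeff (U k) k \<noteq> 0" using U_coeff by simp
  moreover have "\<forall>j>k. coeff (U k) j = 0" using U_coeff by simp
  ultimately show ?thesis
    by (metis le_degree leI antisym degree_le)
qed

lemma U_cheb:
  fixes t :: real
  assumes "t \<noteq> 0"
  shows "(t - 1/t) * poly (U k) (t + 1/t) = t ^ Suc k - (1/t) ^ Suc k"
proof (induction k rule: U.induct)
  case 1 thus ?case by simp
next
  case 2 thus ?case using assms by (simp add: field_simps power2_eq_square)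
next
  case (3 k)
  have eqU: "poly (U (Suc (Suc k))) (t + 1/t) = (t + 1/t) * poly (U (Suc k)) (t + 1/t) - poly (U k) (t + 1/t)"
    by simp
  have gen: "\<And>a w P Q::real. a * (w*P - Q) = w*(a*P) - a*Q" by (simp add: algebra_simps)
  have "(t - 1/t) * poly (U (Suc (Suc k))) (t + 1/t)
     = (t + 1/t) * ((t - 1/t) * poly (U (Suc k)) (t + 1/t)) - (t - 1/t) * poly (U k) (t + 1/t)"
    unfolding eqU by (rule gen)
  also have "\<dots> = (t + 1/t) * (t ^ Suc (Suc k) - (1/t) ^ Suc (Suc k)) - (t ^ Suc k - (1/t) ^ Suc k)"
    using 3 by simp
  also have "\<dots> = t ^ Suc (Suc (Suc k)) - (1/t) ^ Suc (Suc (Suc k))"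
    using assms by (simp add: field_simps)
  finally show ?case .
qed

lemma poly_roots_prod:
  fixes p :: "real poly" and z :: "nat \<Rightarrow> real"
  assumes deg: "degree p \<le> N" and inj: "inj_on z {1..N}"
    and roots: "\<forall>i\<in>{1..N}. poly p (z i) = 0"
  shows "p = smult (coeff p N) (\<Prod>i=1..N. [:- z i, 1:])"
proof -
  define Q where "Q = (\<Prod>i=1..N. [:- z i, 1:])"
  have degQ: "degree Q = N" unfolding Q_def
    by (subst degree_prod_sum_eq) auto
  have lcQ: "coeff Q N = 1"
    using lead_coeff_prod[of "\<lambda>i. [:- z i, 1:]" "{1..N}"] degQ unfolding Q_def by simp
  define r where "r = p - smult (coeff p N) Q"
  have rN: "coeff r N = 0" unfolding r_def using lcQ by simp
  have degr: "degree r \<le> N" unfolding r_def using deg degQ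
    by (intro degree_diff_le) auto
  have "r = 0"
  proof (rule ccontr)
    assume "r \<noteq> 0"
    hence "degree r \<noteq> N" using rN by (metis leading_coeff_0_iff)
    with degr have dl: "degree r < N" by simp
    have "z ` {1..N} \<subseteq> {x. poly r x = 0}"
    proof
      fix x assume "x \<in> z ` {1..N}"
      then obtain i where i: "i \<in> {1..N}" "x = z i" by auto
      have "poly Q (z i) = 0" unfolding Q_def poly_prod
        by (rule prod_zero) (use i in auto)
      thus "x \<in> {x. poly r x = 0}" using roots i unfolding r_def by simp
    qed
    hence "card (z ` {1..N}) \<le> card {x. poly r x = 0}"
      by (intro card_mono poly_roots_finite \<open>r \<noteq> 0\<close>)
    also have "\<dots> \<le> degree r" by (rule card_poly_roots_bound[OF \<open>r \<noteq> 0\<close>])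
    finally show False using card_image[OF inj] dl by simp
  qed
  thus ?thesis unfolding r_def Q_def by simp
qed

lemma prod_monom: "finite A \<Longrightarrow> (\<Prod>x\<in>A. monom (f x) (g x)) = monom (\<Prod>x\<in>A. f x) (\<Sum>x\<in>A. g x)"
  by (induction A rule: finite_induct) (auto simp: mult_monom)

lemma coeff_prod_lin:
  fixes v :: "'a \<Rightarrow> real"
  assumes "finite A"
  shows "coeff (\<Prod>a\<in>A. [:1, v a:]) k = (\<Sum>B\<in>{B. B \<subseteq> A \<and> card B = k}. \<Prod>b\<in>B. v b)"
proof -
  have "(\<Prod>a\<in>A. [:1, v a:]) = (\<Prod>a\<in>A. monom (v a) 1 + 1)"
    by (intro prod.cong) (auto simp: monom_Suc one_pCons monom_0)
  also have "\<dots> = (\<Sum>B\<in>Pow A. prod (\<lambda>a. monom (v a) 1) B * prod (\<lambda>_. 1) (A - B))"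
    by (rule prod_add[OF assms])
  also have "\<dots> = (\<Sum>B\<in>Pow A. monom (\<Prod>b\<in>B. v b) (card B))"
  proof (intro sum.cong refl)
    fix B assume "B \<in> Pow A"
    hence "finite B" using assms finite_subset by auto
    thus "prod (\<lambda>a. monom (v a) 1) B * prod (\<lambda>_. 1) (A - B) = monom (\<Prod>b\<in>B. v b) (card B)"
      by (simp add: prod_monom)
  qed
  finally have "coeff (\<Prod>a\<in>A. [:1, v a:]) k = (\<Sum>B\<in>Pow A. if card B = k then \<Prod>b\<in>B. v b else 0)"
    by (simp add: coeff_sum coeff_monom eq_commute)
  also have "\<dots> = (\<Sum>B\<in>{B \<in> Pow A. card B = k}. \<Prod>b\<in>B. v b)"
    using assms by (intro sum.inter_filter[symmetric]) auto
  also have "{B \<in> Pow A. card B = k} = {B. B \<subseteq> A \<and> card B = k}" by auto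
  finally show ?thesis by simp
qed

definition gp :: "nat \<Rightarrow> real \<Rightarrow> real" where
  "gp m x = x ^ m - (1/x) ^ m"

definition dmat :: "nat \<Rightarrow> (nat \<Rightarrow> nat) \<Rightarrow> (nat \<Rightarrow> real) \<Rightarrow> real mat" where
  "dmat N ex x = mat N N (\<lambda>(i,j). gp (ex j) (x (Suc i)))"

definition Dn :: "nat \<Rightarrow> (nat \<Rightarrow> real) \<Rightarrow> real" where
  "Dn N x = det (dmat N (\<lambda>j. N - j) x)"

definition zz :: "(nat \<Rightarrow> real) \<Rightarrow> nat \<Rightarrow> real" where
  "zz x i = x i + 1 / x i"

definition exd :: "nat \<Rightarrow> nat \<Rightarrow> nat \<Rightarrow> nat" where
  "exd N j c = (if c < j then Suc N - c else N - c)"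

definition Cd :: "nat \<Rightarrow> (nat \<Rightarrow> real) \<Rightarrow> nat \<Rightarrow> real" where
  "Cd N x j = det (dmat N (exd N j) x)"

lemma dmat_carrier: "dmat N ex x \<in> carrier_mat N N"
  unfolding dmat_def by simp

lemma laplace_dmat:
  "det (dmat (Suc N) (\<lambda>j. Suc N - j) x) =
     (\<Sum>j<Suc N. gp (Suc N - j) (x (Suc N)) * ((-1) ^ (N + j) * Cd N x j))"
proof -
  let ?A = "dmat (Suc N) (\<lambda>j. Suc N - j) x"
  have "det ?A = (\<Sum>j<Suc N. ?A $$ (N, j) * cofactor ?A N j)"
    by (rule laplace_expansion_row[OF dmat_carrier]) simp
  also have "\<dots> = (\<Sum>j<Suc N. gp (Suc N - j) (x (Suc N)) * ((-1) ^ (N + j) * Cd N x j))"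
  proof (intro sum.cong refl)
    fix j assume j: "j \<in> {..<Suc N}"
    have md: "mat_delete ?A N j = dmat N (exd N j) x"
      by (rule eq_matI) (use j in \<open>auto simp: mat_delete_def dmat_def exd_def\<close>)
    have e: "?A $$ (N, j) = gp (Suc N - j) (x (Suc N))" using j by (simp add: dmat_def)
    show "?A $$ (N, j) * cofactor ?A N j = gp (Suc N - j) (x (Suc N)) * ((-1) ^ (N + j) * Cd N x j)"
      unfolding e cofactor_def md Cd_def by simp
  qed
  finally show ?thesis .
qed

lemma Cd_indep:
  "Cd N (x(Suc N := t)) j = Cd N x j"
proof -
  have "dmat N (exd N j) (x(Suc N := t)) = dmat N (exd N j) x"
    unfolding dmat_def by (rule eq_matI) auto
  thus ?thesis unfolding Cd_def by simp
qed

lemma Cd0: "Cd N x 0 = Dn N x"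
  unfolding Cd_def Dn_def exd_def by simp

definition pstep :: "nat \<Rightarrow> (nat \<Rightarrow> real) \<Rightarrow> real poly" where
  "pstep N x = (\<Sum>j<Suc N. smult ((-1) ^ (N + j) * Cd N x j) (U (N - j)))"

lemma gp_U: "t \<noteq> 0 \<Longrightarrow> j \<le> N \<Longrightarrow> gp (Suc N - j) t = (t - 1/t) * poly (U (N - j)) (t + 1/t)"
  unfolding gp_def using U_cheb[of t "N - j"] by (simp add: Suc_diff_le)

lemma det_pstep:
  assumes "t \<noteq> 0"
  shows "det (dmat (Suc N) (\<lambda>j. Suc N - j) (x(Suc N := t))) = (t - 1/t) * poly (pstep N x) (t + 1/t)"
proof -
  have "det (dmat (Suc N) (\<lambda>j. Suc N - j) (x(Suc N := t))) =
     (\<Sum>j<Suc N. gp (Suc N - j) t * ((-1) ^ (N + j) * Cd N x j))"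
    unfolding laplace_dmat Cd_indep by simp
  also have "\<dots> = (\<Sum>j<Suc N. (t - 1/t) * (((-1) ^ (N + j) * Cd N x j) * poly (U (N - j)) (t + 1/t)))"
    by (intro sum.cong refl) (use assms in \<open>auto simp: gp_U\<close>)
  also have "\<dots> = (t - 1/t) * poly (pstep N x) (t + 1/t)"
    unfolding pstep_def by (simp add: poly_sum sum_distrib_left del: sum.lessThan_Suc)
  finally show ?thesis .
qed

lemma degree_pstep: "degree (pstep N x) \<le> N"
  unfolding pstep_def
  by (intro degree_sum_le) (auto intro: order.trans[OF degree_smult_le] simp: U_degree)

lemma coeff_pstep: "coeff (pstep N x) N = (-1) ^ N * Dn N x"
proof -
  have "coeff (pstep N x) N = (\<Sum>j<Suc N. (-1) ^ (N + j) * Cd N x j * coeff (U (N - j)) N)"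
    unfolding pstep_def by (simp add: coeff_sum del: sum.lessThan_Suc)
  also have "\<dots> = (\<Sum>j<Suc N. if j = 0 then (-1) ^ N * Dn N x else 0)"
  proof (intro sum.cong refl)
    fix j assume jj: "j \<in> {..<Suc N}"
    show "(-1) ^ (N + j) * Cd N x j * coeff (U (N - j)) N = (if j = 0 then (-1) ^ N * Dn N x else 0)"
    proof (cases "j = 0")
      case True thus ?thesis using U_coeff[of N] by (simp add: Cd0)
    next
      case False
      hence "coeff (U (N - j)) N = 0" using U_coeff[of "N - j"] jj by auto
      thus ?thesis using False by simp
    qed
  qed
  also have "\<dots> = (-1) ^ N * Dn N x" by simp
  finally show ?thesis .
qed

definition incr :: "nat \<Rightarrow> (nat \<Rightarrow> real) \<Rightarrow> bool" where
  "incr N x \<longleftrightarrow> (\<forall>i\<in>{1..N}. x i > 1) \<and> (\<forall>i j. 1 \<le> i \<longrightarrow> i < j \<longrightarrow> j \<le> N \<longrightarrow> x i < x j)"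

lemma zz_strict: "1 < a \<Longrightarrow> a < b \<Longrightarrow> a + 1/a < b + 1/(b::real)"
proof -
  assume ab: "1 < a" "a < b"
  have "b + 1/b - (a + 1/a) = (b - a) * (1 - 1/(a*b))"
    using ab by (simp add: field_simps)
  moreover have "1/(a*b) < 1" using ab by (simp add: field_simps) (metis less_trans mult_strict_mono' less_le_not_le mult_1 zero_le_one)
  ultimately show ?thesis using ab by (smt (verit) mult_pos_pos)
qed

lemma incr_inj: "incr N x \<Longrightarrow> inj_on (zz x) {1..N}"
proof (rule inj_onI, rule ccontr)
  fix i j assume inc: "incr N x" and ij: "i \<in> {1..N}" "j \<in> {1..N}" "zz x i = zz x j" "i \<noteq> j"
  show False
  proof (cases "i < j")
    case True
    hence "x i < x j" using inc ij unfolding incr_def by auto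
    hence "zz x i < zz x j" unfolding zz_def using inc ij by (intro zz_strict) (auto simp: incr_def)
    thus False using ij by simp
  next
    case False
    hence "j < i" using ij by simp
    hence "x j < x i" using inc ij unfolding incr_def by auto
    hence "zz x j < zz x i" unfolding zz_def using inc ij by (intro zz_strict) (auto simp: incr_def)
    thus False using ij by simp
  qed
qed

lemma pstep_roots:
  assumes "incr N x" "i \<in> {1..N}"
  shows "poly (pstep N x) (zz x i) = 0"
proof -
  have xi: "x i > 1" using assms unfolding incr_def by auto
  let ?x = "x(Suc N := x i)"
  have "det (dmat (Suc N) (\<lambda>j. Suc N - j) ?x) = 0"
  proof (rule det_identical_rows[OF dmat_carrier, of "i - 1" N])
    show "i - 1 \<noteq> N" "i - 1 < Suc N" "N < Suc N" using assms(2) by auto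
    show "row (dmat (Suc N) (\<lambda>j. Suc N - j) ?x) (i - 1) = row (dmat (Suc N) (\<lambda>j. Suc N - j) ?x) N"
      using assms(2) unfolding dmat_def by (auto simp: row_mat)
  qed
  hence "(x i - 1 / x i) * poly (pstep N x) (x i + 1 / x i) = 0"
    using det_pstep[of "x i" N x] xi by simp
  moreover have "x i - 1 / x i \<noteq> 0"
  proof -
    have "1 / x i < 1" using xi by simp
    thus ?thesis using xi by linarith
  qed
  ultimately show ?thesis unfolding zz_def by simp
qed

lemma pstep_eq:
  assumes "incr N x"
  shows "pstep N x = smult ((-1) ^ N * Dn N x) (\<Prod>i=1..N. [:- zz x i, 1:])"
  using poly_roots_prod[OF degree_pstep incr_inj[OF assms]] pstep_roots[OF assms] coeff_pstep
  by simp

lemma incr_mono: "incr (Suc N) x \<Longrightarrow> incr N x"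
  unfolding incr_def by auto

theorem Dn_formula:
  "incr N x \<Longrightarrow> Dn N x = (\<Prod>i=1..N. x i - 1 / x i) * (\<Prod>i=1..N. \<Prod>j=Suc i..N. zz x i - zz x j)"
proof (induction N)
  case 0
  show ?case unfolding Dn_def by (simp add: det_dim_zero[OF dmat_carrier])
next
  case (Suc N)
  have inc: "incr N x" using incr_mono[OF Suc.prems] .
  define t where "t = x (Suc N)"
  have t1: "t > 1" using Suc.prems unfolding incr_def t_def by auto
  have "Dn (Suc N) x = det (dmat (Suc N) (\<lambda>j. Suc N - j) (x(Suc N := t)))"
    unfolding Dn_def t_def by simp
  also have "\<dots> = (t - 1/t) * poly (pstep N x) (t + 1/t)"
    using t1 by (intro det_pstep) simp
  also have "\<dots> = (t - 1/t) * ((-1) ^ N * Dn N x * (\<Prod>i=1..N. t + 1/t - zz x i))"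
    unfolding pstep_eq[OF inc] by (simp add: poly_prod)
  also have "(-1) ^ N * (\<Prod>i=1..N. t + 1/t - zz x i) = (\<Prod>i=1..N. zz x i - zz x (Suc N))"
  proof -
    have "(\<Prod>i=1..N. zz x i - zz x (Suc N)) = (\<Prod>i=1..N. - (t + 1/t - zz x i))"
      unfolding t_def by (intro prod.cong refl) (simp add: zz_def)
    also have "\<dots> = (-1) ^ N * (\<Prod>i=1..N. t + 1/t - zz x i)"
      using prod_uminus[of "\<lambda>i. t + 1/t - zz x i" "{1..N}"] by simp
    finally show ?thesis by simp
  qed
  hence "(t - 1/t) * ((-1) ^ N * Dn N x * (\<Prod>i=1..N. t + 1/t - zz x i))
       = (t - 1/t) * Dn N x * (\<Prod>i=1..N. zz x i - zz x (Suc N))"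
    by (simp add: algebra_simps)
  also have "\<dots> = (\<Prod>i=1..Suc N. x i - 1 / x i) * (\<Prod>i=1..Suc N. \<Prod>j=Suc i..Suc N. zz x i - zz x j)"
  proof -
    have "(\<Prod>i=1..Suc N. \<Prod>j=Suc i..Suc N. zz x i - zz x j)
        = (\<Prod>i=1..N. (\<Prod>j=Suc i..N. zz x i - zz x j) * (zz x i - zz x (Suc N)))"
      by (simp add: prod.cl_ivl_Suc)
    also have "\<dots> = (\<Prod>i=1..N. \<Prod>j=Suc i..N. zz x i - zz x j) * (\<Prod>i=1..N. zz x i - zz x (Suc N))"
      by (rule prod.distrib)
    finally show ?thesis using Suc.IH[OF inc] unfolding t_def
      by (simp add: prod.cl_ivl_Suc algebra_simps)
  qed
  finally show ?case .
qed

lemma poly_eq_gt1: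
  fixes p q :: "real poly"
  assumes "\<forall>t>1. poly p t = poly q t"
  shows "p = q"
proof -
  have "p - q = 0"
  proof (rule ccontr)
    assume "p - q \<noteq> 0"
    hence "finite {x. poly (p - q) x = 0}" by (rule poly_roots_finite)
    moreover have "{1<..2::real} \<subseteq> {x. poly (p - q) x = 0}" using assms by auto
    ultimately have "finite {1<..2::real}" by (rule finite_subset[rotated])
    thus False using infinite_Ioc[of "1::real" 2] by simp
  qed
  thus ?thesis by simp
qed

definition Jn :: "nat \<Rightarrow> (nat \<times> bool) set" where
  "Jn n = {1..n} \<times> UNIV"

definition valx :: "(nat \<Rightarrow> real) \<Rightarrow> nat \<times> bool \<Rightarrow> real" where
  "valx x b = (if snd b then x (fst b) else 1 / x (fst b))"

definition Ecoef :: "nat \<Rightarrow> (nat \<Rightarrow> real) \<Rightarrow> nat \<Rightarrow> real" where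
  "Ecoef n x j = coeff (\<Prod>b\<in>Jn n. [:1, valx x b:]) j"

definition Gneg :: "nat \<Rightarrow> (nat \<Rightarrow> real) \<Rightarrow> real poly" where
  "Gneg n x = (\<Prod>b\<in>Jn n. [:1, - valx x b:])"

lemma finite_Jn [simp]: "finite (Jn n)"
  unfolding Jn_def by simp

lemma coeff_Gneg: "coeff (Gneg n x) k = (-1) ^ k * Ecoef n x k"
proof -
  have "coeff (Gneg n x) k = (\<Sum>B\<in>{B. B \<subseteq> Jn n \<and> card B = k}. \<Prod>b\<in>B. - valx x b)"
    unfolding Gneg_def by (rule coeff_prod_lin) simp
  also have "\<dots> = (\<Sum>B\<in>{B. B \<subseteq> Jn n \<and> card B = k}. (-1) ^ k * (\<Prod>b\<in>B. valx x b))"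
    by (intro sum.cong refl) (auto simp: prod_uminus)
  also have "\<dots> = (-1) ^ k * Ecoef n x k"
    unfolding Ecoef_def by (subst coeff_prod_lin) (simp_all add: sum_distrib_left)
  finally show ?thesis .
qed

lemma poly_Gneg:
  assumes "\<forall>i\<in>{1..n}. x i \<noteq> 0" "t \<noteq> 0"
  shows "poly (Gneg n x) t = t ^ n * (\<Prod>i=1..n. t + 1/t - zz x i)"
proof -
  have "poly (Gneg n x) t = (\<Prod>b\<in>{1..n} \<times> UNIV. 1 - t * valx x b)"
    unfolding Gneg_def Jn_def poly_prod by simp
  also have "\<dots> = (\<Prod>i=1..n. \<Prod>b\<in>UNIV. 1 - t * valx x (i, b))"
    by (rule prod.cartesian_product')
  also have "\<dots> = (\<Prod>i=1..n. t * (t + 1/t - zz x i))"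
  proof (intro prod.cong refl)
    fix i assume "i \<in> {1..n}"
    hence xi: "x i \<noteq> 0" using assms by auto
    have "(\<Prod>b\<in>UNIV. 1 - t * valx x (i, b)) = (1 - t * x i) * (1 - t / x i)"
      by (simp add: UNIV_bool valx_def)
    also have "\<dots> = t * (t + 1/t - zz x i)"
      using xi assms(2) by (simp add: zz_def field_simps)
    finally show "(\<Prod>b\<in>UNIV. 1 - t * valx x (i, b)) = t * (t + 1/t - zz x i)" .
  qed
  also have "\<dots> = t ^ n * (\<Prod>i=1..n. t + 1/t - zz x i)"
    by (simp add: prod.distrib)
  finally show ?thesis .
qed

lemma pow_lemma:
  fixes t :: real
  assumes "t \<noteq> 0" "j \<le> n"
  shows "t ^ Suc n * (t ^ (Suc n - j) - (1/t) ^ (Suc n - j)) = t ^ (2 * n + 2 - j) - t ^ j"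
proof -
  have a: "t ^ Suc n = t ^ (Suc n - j) * t ^ j"
    using assms(2) by (simp add: power_add[symmetric])
  have b: "t ^ (Suc n - j) * (1/t) ^ (Suc n - j) = 1"
    using assms(1) by (simp add: power_one_over field_simps)
  have e: "2 * n + 2 - j = (Suc n - j) + j + (Suc n - j)" using assms(2) by simp
  have c: "t ^ (2 * n + 2 - j) = t ^ (Suc n - j) * t ^ j * t ^ (Suc n - j)"
    unfolding e power_add by simp
  show ?thesis
    unfolding a c using b by (simp add: algebra_simps)
qed

theorem Cd_extract:
  assumes inc: "incr n x" and sn: "s \<le> n"
  shows "Cd n x s = Dn n x * (Ecoef n x s - (if 2 \<le> s then Ecoef n x (s - 2) else 0))"
proof -
  define PL where "PL = (\<Sum>j<Suc n. smult ((-1) ^ (n + j) * Cd n x j)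
                          (monom 1 (2 * n + 2 - j) - monom 1 j))"
  define PR where "PR = smult ((-1) ^ n * Dn n x) (pCons 0 (pCons 0 (Gneg n x)) - Gneg n x)"
  have xnz: "\<forall>i\<in>{1..n}. x i \<noteq> 0" using inc unfolding incr_def by fastforce
  have "PL = PR"
  proof (rule poly_eq_gt1, intro allI impI)
    fix t :: real assume t: "t > 1"
    hence t0: "t \<noteq> 0" by simp
    have "poly PL t = (\<Sum>j<Suc n. (-1) ^ (n + j) * Cd n x j * (t ^ (2 * n + 2 - j) - t ^ j))"
      unfolding PL_def by (simp add: poly_sum poly_monom del: sum.lessThan_Suc)
    also have "\<dots> = (\<Sum>j<Suc n. (-1) ^ (n + j) * Cd n x j *
                    (t ^ Suc n * ((t - 1/t) * poly (U (n - j)) (t + 1/t))))"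
    proof (intro sum.cong refl)
      fix j assume "j \<in> {..<Suc n}"
      hence j: "j \<le> n" by simp
      have "(t - 1/t) * poly (U (n - j)) (t + 1/t) = t ^ (Suc n - j) - (1/t) ^ (Suc n - j)"
        using U_cheb[OF t0, of "n - j"] j by (simp add: Suc_diff_le)
      thus "(-1) ^ (n + j) * Cd n x j * (t ^ (2 * n + 2 - j) - t ^ j) =
            (-1) ^ (n + j) * Cd n x j * (t ^ Suc n * ((t - 1/t) * poly (U (n - j)) (t + 1/t)))"
        using pow_lemma[OF t0 j] by simp
    qed
    also have "\<dots> = t ^ Suc n * (t - 1/t) * poly (pstep n x) (t + 1/t)"
      unfolding pstep_def by (simp add: poly_sum sum_distrib_left algebra_simps del: sum.lessThan_Suc)
    also have "\<dots> = t ^ Suc n * (t - 1/t) * ((-1) ^ n * Dn n x * (\<Prod>i=1..n. t + 1/t - zz x i))"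
      unfolding pstep_eq[OF inc] by (simp add: poly_prod)
    also have "\<dots> = (-1) ^ n * Dn n x * (t * t - 1) * (t ^ n * (\<Prod>i=1..n. t + 1/t - zz x i))"
      using t0 by (simp add: field_simps)
    also have "\<dots> = poly PR t"
      unfolding PR_def using poly_Gneg[OF xnz t0] by (simp add: algebra_simps)
    finally show "poly PL t = poly PR t" .
  qed
  have cL: "coeff PL s = - ((-1) ^ (n + s) * Cd n x s)"
  proof -
    have "coeff PL s = (\<Sum>j<Suc n. (-1) ^ (n + j) * Cd n x j *
            ((if 2 * n + 2 - j = s then 1 else 0) - (if j = s then 1 else 0)))"
      unfolding PL_def by (simp add: coeff_sum coeff_monom del: sum.lessThan_Suc)
    also have "\<dots> = (\<Sum>j<Suc n. if j = s then - ((-1) ^ (n + j) * Cd n x j) else 0)"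
      by (intro sum.cong refl) (use sn in auto)
    also have "\<dots> = - ((-1) ^ (n + s) * Cd n x s)" using sn by simp
    finally show ?thesis .
  qed
  have cR: "coeff PR s = (-1) ^ n * Dn n x *
       ((if 2 \<le> s then (-1) ^ (s - 2) * Ecoef n x (s - 2) else 0) - (-1) ^ s * Ecoef n x s)"
  proof -
    have "coeff (pCons 0 (pCons 0 (Gneg n x))) s = (if 2 \<le> s then coeff (Gneg n x) (s - 2) else 0)"
    proof (cases s)
      case (Suc s') thus ?thesis by (cases s') (auto simp: coeff_pCons)
    qed simp
    thus ?thesis unfolding PR_def by (simp add: coeff_Gneg)
  qed
  define sg where "sg = ((-1::real) ^ s)"
  have sg2: "sg * sg = 1" unfolding sg_def by (simp add: power_mult_distrib[symmetric])
  have sg3: "sg * (sg * X) = X" for X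
    by (simp add: mult.assoc[symmetric] sg2)
  have nn: "(-1::real) ^ n * (-1) ^ n = 1" by (simp add: power_mult_distrib[symmetric])
  have s2: "(-1::real) ^ (s - 2) = sg" if s2ass: "2 \<le> s"
  proof -
    obtain k where k: "s = 2 + k" using le_Suc_ex[OF s2ass] by blast
    show ?thesis by (simp add: sg_def k power_add)
  qed
  have eq: "- ((-1) ^ n * sg * Cd n x s) = (-1) ^ n * Dn n x *
       ((if 2 \<le> s then sg * Ecoef n x (s - 2) else 0) - sg * Ecoef n x s)"
    using cL cR \<open>PL = PR\<close> s2 unfolding sg_def by (auto simp: power_add)
  have "Cd n x s = (- ((-1) ^ n * sg)) * (- ((-1) ^ n * sg * Cd n x s))"
    using sg2 nn by (simp add: algebra_simps)
  also have "\<dots> = Dn n x * (Ecoef n x s - (if 2 \<le> s then Ecoef n x (s - 2) else 0))"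
    unfolding eq using sg2 nn by (auto simp: algebra_simps sg3)
  finally show ?thesis .
qed

definition phi :: "nat \<Rightarrow> (nat \<Rightarrow> int) \<Rightarrow> int" where
  "phi n v = (\<Sum>i=1..n. int (n + 1 - i) * v i)"

definition vs :: "(nat \<Rightarrow> int) set \<Rightarrow> nat \<Rightarrow> int" where
  "vs S = (\<lambda>k. \<Sum>a\<in>S. a k)"

definition rmi :: "nat \<Rightarrow> nat \<Rightarrow> nat \<Rightarrow> int" where
  "rmi i j = (\<lambda>k. eps2 i k - eps2 j k)"
definition rpl :: "nat \<Rightarrow> nat \<Rightarrow> nat \<Rightarrow> int" where
  "rpl i j = (\<lambda>k. eps2 i k + eps2 j k)"

definition Pn :: "nat \<Rightarrow> (nat \<times> nat) set" where
  "Pn n = {(i, j). 1 \<le> i \<and> i < j \<and> j \<le> n}"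

lemma Pn_Sigma: "Pn n = Sigma {1..n} (\<lambda>i. {Suc i..n})"
  unfolding Pn_def by auto

lemma finite_Pn [simp]: "finite (Pn n)"
  unfolding Pn_Sigma by simp

lemma posroots_eq: "posroots n = (\<lambda>p. rmi (fst p) (snd p)) ` Pn n \<union> (\<lambda>p. rpl (fst p) (snd p)) ` Pn n \<union> eps2 ` {1..n}"
proof -
  have 1: "{(\<lambda>k. eps2 i k - eps2 j k) | i j. 1 \<le> i \<and> i < j \<and> j \<le> n} = (\<lambda>p. rmi (fst p) (snd p)) ` Pn n"
    unfolding rmi_def Pn_def image_def by auto
  have 2: "{(\<lambda>k. eps2 i k + eps2 j k) | i j. 1 \<le> i \<and> i < j \<and> j \<le> n} = (\<lambda>p. rpl (fst p) (snd p)) ` Pn n"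
    unfolding rpl_def Pn_def image_def by auto
  have 3: "{eps2 i | i. 1 \<le> i \<and> i \<le> n} = eps2 ` {1..n}"
    unfolding image_def by auto
  show ?thesis unfolding posroots_def 1 2 3 ..
qed

lemma finite_posroots [simp]: "finite (posroots n)"
  unfolding posroots_eq by simp

lemma phi_sum: "phi n (\<lambda>k. \<Sum>a\<in>R. f a * a k) = (\<Sum>a\<in>R. f a * phi n a)"
  unfolding phi_def by (simp add: sum_distrib_left sum_distrib_right mult.assoc mult.left_commute) (rule sum.swap)

lemma phi_eps2: "i \<in> {1..n} \<Longrightarrow> phi n (eps2 i) = 2 * int (n + 1 - i)"
  unfolding phi_def eps2_def by (simp add: if_distrib cong: if_cong)

lemma phi_diff: "phi n (\<lambda>k. u k - v k) = phi n u - phi n v"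
  unfolding phi_def by (simp add: sum_subtractf right_diff_distrib)
lemma phi_add: "phi n (\<lambda>k. u k + v k) = phi n u + phi n v"
  unfolding phi_def by (simp add: sum.distrib distrib_left)

lemma phi_pos: "a \<in> posroots n \<Longrightarrow> phi n a > 0"
proof -
  assume "a \<in> posroots n"
  then consider (m) i j where "(i,j) \<in> Pn n" "a = rmi i j" | (p) i j where "(i,j) \<in> Pn n" "a = rpl i j"
    | (s) i where "i \<in> {1..n}" "a = eps2 i"
    unfolding posroots_eq by auto
  thus ?thesis
  proof cases
    case m
    hence "phi n a = phi n (eps2 i) - phi n (eps2 j)" unfolding rmi_def by (simp add: phi_diff)
    thus ?thesis using m by (auto simp: phi_eps2 Pn_def)
  next
    case p
    hence "phi n a = phi n (eps2 i) + phi n (eps2 j)" unfolding rpl_def by (simp add: phi_add)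
    thus ?thesis using p by (auto simp: phi_eps2 Pn_def)
  next
    case s thus ?thesis by (auto simp: phi_eps2)
  qed
qed

section \<open>Kostant partition function\<close>

definition kset :: "(nat \<Rightarrow> int) set \<Rightarrow> (nat \<Rightarrow> int) \<Rightarrow> ((nat \<Rightarrow> int) \<Rightarrow> nat) set" where
  "kset R nu = {c. (\<forall>a. a \<notin> R \<longrightarrow> c a = 0) \<and> (\<lambda>k. \<Sum>a\<in>R. int (c a) * a k) = nu}"

definition kp :: "(nat \<Rightarrow> int) set \<Rightarrow> (nat \<Rightarrow> int) \<Rightarrow> nat" where
  "kp R nu = card (kset R nu)"

lemma kostant_kp: "kostant n = kp (posroots n)"
  unfolding kostant_def kp_def kset_def by (rule ext) simp

lemma kset_finite:
  assumes fin: "finite R" and pos: "\<forall>a\<in>R. phi n a > 0"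
  shows "finite (kset R nu)"
proof -
  have "kset R nu \<subseteq> {c. \<forall>x. (x \<in> R \<longrightarrow> c x \<in> {0..nat (phi n nu)}) \<and> (x \<notin> R \<longrightarrow> c x = 0)}"
  proof safe
    fix c x assume c: "c \<in> kset R nu" and x: "x \<in> R"
    have p1: "phi n x \<ge> 1" using pos x by fastforce
    have "int (c x) \<le> int (c x) * phi n x"
      using mult_left_mono[OF p1, of "int (c x)"] by simp
    also have "\<dots> \<le> (\<Sum>a\<in>R. int (c a) * phi n a)"
      using fin x pos by (intro member_le_sum) auto
    also have "\<dots> = phi n nu"
      using c unfolding kset_def by (auto simp: phi_sum)
    finally show "c x \<in> {0..nat (phi n nu)}" by auto
  next
    fix c x assume "c \<in> kset R nu" "x \<notin> R"
    thus "c x = 0" unfolding kset_def by auto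
  qed
  moreover have "finite {c. \<forall>x. (x \<in> R \<longrightarrow> c x \<in> {0..nat (phi n nu)}) \<and> (x \<notin> R \<longrightarrow> c x = 0)}"
    by (rule finite_set_of_finite_funs) (use fin in auto)
  ultimately show ?thesis by (rule finite_subset)
qed

lemma sum_upd:
  assumes "finite R" "a \<in> R"
  shows "(\<Sum>x\<in>R. int ((c(a := v)) x) * x k) = (\<Sum>x\<in>R - {a}. int (c x) * x k) + int v * a k"
proof -
  have "(\<Sum>x\<in>R. int ((c(a := v)) x) * x k) = int ((c(a := v)) a) * a k + (\<Sum>x\<in>R - {a}. int ((c(a := v)) x) * x k)"
    using assms by (rule sum.remove)
  also have "(\<Sum>x\<in>R - {a}. int ((c(a := v)) x) * x k) = (\<Sum>x\<in>R - {a}. int (c x) * x k)"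
    by (rule sum.cong) auto
  finally show ?thesis by simp
qed

lemma kp_rec:
  assumes fin: "finite R" and pos: "\<forall>a\<in>R. phi n a > 0" and a: "a \<in> R"
  shows "int (kp R nu) = int (kp (R - {a}) nu) + int (kp R (\<lambda>k. nu k - a k))"
proof -
  let ?S = "kset R nu"
  define S0 where "S0 = {c \<in> ?S. c a = 0}"
  define S1 where "S1 = {c \<in> ?S. c a \<noteq> 0}"
  have finS: "finite ?S" by (rule kset_finite[OF fin pos])
  have "card ?S = card S0 + card S1"
  proof -
    have "?S = S0 \<union> S1" "S0 \<inter> S1 = {}" unfolding S0_def S1_def by auto
    thus ?thesis using finS card_Un_disjoint[of S0 S1] unfolding S0_def S1_def by auto
  qed
  moreover have "S0 = kset (R - {a}) nu"
  proof safe
    fix c assume "c \<in> S0"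
    hence c: "\<forall>x. x \<notin> R \<longrightarrow> c x = 0" "(\<lambda>k. \<Sum>x\<in>R. int (c x) * x k) = nu" "c a = 0"
      unfolding S0_def kset_def by auto
    have "(\<lambda>k. \<Sum>x\<in>R - {a}. int (c x) * x k) = nu"
      using sum_upd[OF fin a, of c 0] c by (simp add: fun_upd_idem)
    thus "c \<in> kset (R - {a}) nu" using c unfolding kset_def by auto
  next
    fix c assume c: "c \<in> kset (R - {a}) nu"
    hence c': "\<forall>x. x \<notin> R - {a} \<longrightarrow> c x = 0" "(\<lambda>k. \<Sum>x\<in>R - {a}. int (c x) * x k) = nu"
      unfolding kset_def by auto
    hence "c a = 0" by auto
    hence "(\<lambda>k. \<Sum>x\<in>R. int (c x) * x k) = nu"
      using sum_upd[OF fin a, of c 0] c' by (simp add: fun_upd_idem)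
    thus "c \<in> S0" using c' \<open>c a = 0\<close> unfolding S0_def kset_def by auto
  qed
  moreover have "card S1 = card (kset R (\<lambda>k. nu k - a k))"
  proof (rule bij_betw_same_card[of "\<lambda>c. c(a := c a - 1)"], rule bij_betw_byWitness[of _ "\<lambda>c. c(a := c a + 1)"])
    show "\<forall>c\<in>S1. (\<lambda>c. c(a := c a + 1)) (c(a := c a - 1)) = c" unfolding S1_def by auto
    show "\<forall>c\<in>kset R (\<lambda>k. nu k - a k). (\<lambda>c. c(a := c a - 1)) (c(a := c a + 1)) = c" by auto
    show "(\<lambda>c. c(a := c a - 1)) ` S1 \<subseteq> kset R (\<lambda>k. nu k - a k)"
    proof safe
      fix c assume "c \<in> S1"
      hence c: "\<forall>x. x \<notin> R \<longrightarrow> c x = 0" "(\<lambda>k. \<Sum>x\<in>R. int (c x) * x k) = nu" "c a \<noteq> 0"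
        unfolding S1_def kset_def by auto
      have "(\<lambda>k. \<Sum>x\<in>R. int ((c(a := c a - 1)) x) * x k) = (\<lambda>k. nu k - a k)"
      proof
        fix k
        have "(\<Sum>x\<in>R. int ((c(a := c a - 1)) x) * x k) = (\<Sum>x\<in>R - {a}. int (c x) * x k) + int (c a - 1) * a k"
          by (rule sum_upd[OF fin a])
        also have "\<dots> = (\<Sum>x\<in>R. int ((c(a := c a)) x) * x k) - a k"
          using sum_upd[OF fin a, of c "c a" k] c(3) by (simp add: of_nat_diff algebra_simps)
        also have "\<dots> = nu k - a k" using fun_cong[OF c(2), of k] by simp
        finally show "(\<Sum>x\<in>R. int ((c(a := c a - 1)) x) * x k) = nu k - a k" .
      qed
      thus "c(a := c a - 1) \<in> kset R (\<lambda>k. nu k - a k)" using c a unfolding kset_def by auto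
    qed
    show "(\<lambda>c. c(a := c a + 1)) ` kset R (\<lambda>k. nu k - a k) \<subseteq> S1"
    proof safe
      fix c assume "c \<in> kset R (\<lambda>k. nu k - a k)"
      hence c: "\<forall>x. x \<notin> R \<longrightarrow> c x = 0" "(\<lambda>k. \<Sum>x\<in>R. int (c x) * x k) = (\<lambda>k. nu k - a k)"
        unfolding kset_def by auto
      have "(\<lambda>k. \<Sum>x\<in>R. int ((c(a := c a + 1)) x) * x k) = nu"
      proof
        fix k
        have "(\<Sum>x\<in>R. int ((c(a := c a + 1)) x) * x k) = (\<Sum>x\<in>R - {a}. int (c x) * x k) + int (c a + 1) * a k"
          by (rule sum_upd[OF fin a])
        also have "\<dots> = (\<Sum>x\<in>R. int ((c(a := c a)) x) * x k) + a k"
          using sum_upd[OF fin a, of c "c a" k] by (simp add: algebra_simps)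
        also have "\<dots> = nu k" using fun_cong[OF c(2), of k] by simp
        finally show "(\<Sum>x\<in>R. int ((c(a := c a + 1)) x) * x k) = nu k" .
      qed
      thus "c(a := c a + 1) \<in> S1" using c a unfolding S1_def kset_def by auto
    qed
  qed
  ultimately show ?thesis unfolding kp_def by simp
qed

lemma vs_insert: "finite S \<Longrightarrow> a \<notin> S \<Longrightarrow> vs (insert a S) = (\<lambda>k. a k + vs S k)"
  unfolding vs_def by auto

lemma kp_alt:
  assumes fin: "finite R" and pos: "\<forall>a\<in>R. phi n a > 0"
  shows "(\<Sum>S\<in>Pow R. (-1) ^ card S * int (kp R (\<lambda>k. nu k - vs S k))) = (if nu = (\<lambda>_. 0) then 1 else 0)"
  using fin pos
proof (induction R arbitrary: nu rule: finite_induct)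
  case empty
  have "kset {} nu = (if nu = (\<lambda>_. 0) then {\<lambda>_. 0} else {})"
    unfolding kset_def by (auto simp: fun_eq_iff)
  thus ?case by (simp add: kp_def vs_def)
next
  case (insert a R)
  have finR: "finite (insert a R)" using insert by simp
  have posR: "\<forall>b\<in>R. phi n b > 0" using insert by simp
  have rec: "int (kp (insert a R) v) - int (kp (insert a R) (\<lambda>k. v k - a k)) = int (kp R v)" for v
    using kp_rec[OF finR insert.prems, of a v] insert by simp
  have "(\<Sum>S\<in>Pow (insert a R). (-1) ^ card S * int (kp (insert a R) (\<lambda>k. nu k - vs S k)))
     = (\<Sum>S\<in>Pow R. (-1) ^ card S * int (kp (insert a R) (\<lambda>k. nu k - vs S k)))
       + (\<Sum>S\<in>insert a ` Pow R. (-1) ^ card S * int (kp (insert a R) (\<lambda>k. nu k - vs S k)))"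
    unfolding Pow_insert by (rule sum.union_disjoint) (use insert in auto)
  also have "(\<Sum>S\<in>insert a ` Pow R. (-1) ^ card S * int (kp (insert a R) (\<lambda>k. nu k - vs S k)))
      = (\<Sum>S\<in>Pow R. - ((-1) ^ card S * int (kp (insert a R) (\<lambda>k. (nu k - vs S k) - a k))))"
  proof (subst sum.reindex)
    show "inj_on (insert a) (Pow R)"
      by (intro inj_onI) (metis Pow_iff insert_ident subsetD insert.hyps(2))
    show "(\<Sum>S\<in>Pow R. ((\<lambda>S. (-1) ^ card S * int (kp (insert a R) (\<lambda>k. nu k - vs S k))) \<circ> insert a) S) =
      (\<Sum>S\<in>Pow R. - ((-1) ^ card S * int (kp (insert a R) (\<lambda>k. nu k - vs S k - a k))))"
    proof (intro sum.cong refl)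
      fix S assume S: "S \<in> Pow R"
      hence fS: "finite S" "a \<notin> S" using insert finite_subset by auto
      have "card (insert a S) = Suc (card S)" using fS by simp
      moreover have "(\<lambda>k. nu k - vs (insert a S) k) = (\<lambda>k. nu k - vs S k - a k)"
        using vs_insert[OF fS] by auto
      ultimately show "((\<lambda>S. (-1) ^ card S * int (kp (insert a R) (\<lambda>k. nu k - vs S k))) \<circ> insert a) S =
         - ((-1) ^ card S * int (kp (insert a R) (\<lambda>k. nu k - vs S k - a k)))" by simp
    qed
  qed
  also have "(\<Sum>S\<in>Pow R. (-1) ^ card S * int (kp (insert a R) (\<lambda>k. nu k - vs S k)))
       + (\<Sum>S\<in>Pow R. - ((-1) ^ card S * int (kp (insert a R) (\<lambda>k. (nu k - vs S k) - a k))))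
      = (\<Sum>S\<in>Pow R. (-1) ^ card S * int (kp R (\<lambda>k. nu k - vs S k)))"
    unfolding sum.distrib[symmetric] by (intro sum.cong refl) (simp add: rec[symmetric] algebra_simps)
  also have "\<dots> = (if nu = (\<lambda>_. 0) then 1 else 0)" by (rule insert.IH[OF posR])
  finally show ?case .
qed

definition Top :: "nat \<Rightarrow> ((nat \<Rightarrow> int) \<Rightarrow> int) \<Rightarrow> (nat \<Rightarrow> int) \<Rightarrow> int" where
  "Top n f mu = (\<Sum>S\<in>Pow (posroots n). (-1) ^ card S * f (\<lambda>k. mu k + vs S k))"

definition LL :: "nat \<Rightarrow> (nat \<Rightarrow> int) \<Rightarrow> nat \<Rightarrow> int" where
  "LL n lam = (\<lambda>i. lam i + rho2 n i)"

lemma Top_wmult: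
  "Top n (wmult n lam) mu =
     (\<Sum>w\<in>weylB n. wsgn w * (if (\<lambda>k. wact w (LL n lam) k - rho2 n k) = mu then 1 else 0))"
proof -
  have "Top n (wmult n lam) mu = (\<Sum>w\<in>weylB n. wsgn w * (\<Sum>S\<in>Pow (posroots n). (-1) ^ card S *
      int (kp (posroots n) (\<lambda>k. (wact w (LL n lam) k - (mu k + rho2 n k)) - vs S k))))"
    unfolding Top_def wmult_def kostant_kp LL_def
    by (simp add: sum_distrib_left algebra_simps) (rule sum.swap)
  also have "\<dots> = (\<Sum>w\<in>weylB n. wsgn w * (if (\<lambda>k. wact w (LL n lam) k - rho2 n k) = mu then 1 else 0))"
  proof (intro sum.cong refl)
    fix w
    have e: "((\<lambda>k. wact w (LL n lam) k - (mu k + rho2 n k)) = (\<lambda>_. 0)) \<longleftrightarrow>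
             ((\<lambda>k. wact w (LL n lam) k - rho2 n k) = mu)"
      by (auto simp: fun_eq_iff algebra_simps)
    show "wsgn w * (\<Sum>S\<in>Pow (posroots n). (-1) ^ card S *
      int (kp (posroots n) (\<lambda>k. (wact w (LL n lam) k - (mu k + rho2 n k)) - vs S k))) =
      wsgn w * (if (\<lambda>k. wact w (LL n lam) k - rho2 n k) = mu then 1 else 0)"
      by (subst kp_alt) (use phi_pos e in auto)
  qed
  finally show ?thesis .
qed

definition coefs :: "'x set \<Rightarrow> ('x \<Rightarrow> int) \<Rightarrow> ('x \<Rightarrow> nat \<Rightarrow> int) \<Rightarrow> (nat \<Rightarrow> int) \<Rightarrow> int" where
  "coefs X c wt mu = (\<Sum>x\<in>{x\<in>X. wt x = mu}. c x)"

lemma coefs_if: "finite X \<Longrightarrow> coefs X c wt mu = (\<Sum>x\<in>X. if wt x = mu then c x else 0)"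
  unfolding coefs_def by (rule sum.inter_filter)

lemma Top_coefs:
  assumes fin: "finite X"
  shows "Top n (coefs X c wt) mu =
    coefs (X \<times> Pow (posroots n)) (\<lambda>p. (-1) ^ card (snd p) * c (fst p))
          (\<lambda>p k. wt (fst p) k - vs (snd p) k) mu"
proof -
  have e: "(wt x = (\<lambda>k. mu k + vs S k)) \<longleftrightarrow> ((\<lambda>k. wt x k - vs S k) = mu)" for x S
    by (auto simp: fun_eq_iff algebra_simps)
  have "Top n (coefs X c wt) mu = (\<Sum>S\<in>Pow (posroots n). \<Sum>x\<in>X.
      if (\<lambda>k. wt x k - vs S k) = mu then (-1) ^ card S * c x else 0)"
    unfolding Top_def coefs_if[OF fin] e by (simp add: sum_distrib_left if_distrib cong: if_cong)
  also have "\<dots> = (\<Sum>x\<in>X. \<Sum>S\<in>Pow (posroots n).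
      if (\<lambda>k. wt x k - vs S k) = mu then (-1) ^ card S * c x else 0)"
    by (rule sum.swap)
  also have "\<dots> = coefs (X \<times> Pow (posroots n)) (\<lambda>p. (-1) ^ card (snd p) * c (fst p))
          (\<lambda>p k. wt (fst p) k - vs (snd p) k) mu"
  proof -
    have "coefs (X \<times> Pow (posroots n)) (\<lambda>p. (-1) ^ card (snd p) * c (fst p))
          (\<lambda>p k. wt (fst p) k - vs (snd p) k) mu = (\<Sum>p\<in>X \<times> Pow (posroots n).
          if (\<lambda>k. wt (fst p) k - vs (snd p) k) = mu then (-1) ^ card (snd p) * c (fst p) else 0)"
      by (rule coefs_if) (simp add: fin)
    also have "\<dots> = (\<Sum>x\<in>X. \<Sum>S\<in>Pow (posroots n).
      if (\<lambda>k. wt x k - vs S k) = mu then (-1) ^ card S * c x else 0)"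
      unfolding sum.cartesian_product' by (simp cong: if_cong)
    finally show ?thesis by simp
  qed
  finally show ?thesis .
qed

lemma weylB_eq: "weylB n = {\<sigma>. \<sigma> permutes {1..n}} \<times> Pow {1..n}"
  unfolding weylB_def by auto

lemma finite_weylB [simp]: "finite (weylB n)"
  unfolding weylB_eq by (simp add: finite_permutations)

lemma Top_wmult_coefs:
  "Top n (wmult n lam) = coefs (weylB n) wsgn (\<lambda>w k. wact w (LL n lam) k - rho2 n k)"
  by (rule ext, subst Top_wmult, subst coefs_if) (auto simp: if_distrib cong: if_cong)

definition mnm :: "nat \<Rightarrow> (nat \<Rightarrow> int) \<Rightarrow> (nat \<Rightarrow> real) \<Rightarrow> real" where
  "mnm n v y = (\<Prod>i=1..n. y i powi v i)"

definition nzy :: "nat \<Rightarrow> (nat \<Rightarrow> real) \<Rightarrow> bool" where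
  "nzy n y \<longleftrightarrow> (\<forall>i\<in>{1..n}. y i \<noteq> 0)"

lemma mnm_add: "nzy n y \<Longrightarrow> mnm n (\<lambda>k. u k + v k) y = mnm n u y * mnm n v y"
  unfolding mnm_def nzy_def by (simp add: power_int_add prod.distrib)

lemma mnm_zero: "mnm n (\<lambda>_. 0) y = 1"
  unfolding mnm_def by simp

lemma mnm_uminus: "nzy n y \<Longrightarrow> mnm n (\<lambda>k. - v k) y = 1 / mnm n v y"
  unfolding mnm_def nzy_def by (simp add: power_int_minus prod_inversef[unfolded comp_def] divide_inverse)

lemma mnm_sum:
  assumes "nzy n y" "finite S"
  shows "mnm n (\<lambda>k. \<Sum>a\<in>S. f a k) y = (\<Prod>a\<in>S. mnm n (f a) y)"
  using assms(2)
proof (induction S rule: finite_induct)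
  case empty thus ?case by (simp add: mnm_zero)
next
  case (insert a S)
  have "mnm n (\<lambda>k. \<Sum>b\<in>insert a S. f b k) y = mnm n (\<lambda>k. f a k + (\<Sum>b\<in>S. f b k)) y"
    using insert by simp
  also have "\<dots> = mnm n (f a) y * mnm n (\<lambda>k. \<Sum>b\<in>S. f b k) y"
    by (rule mnm_add[OF assms(1)])
  finally show ?case using insert by simp
qed

lemma mnm_minus_vs:
  assumes "nzy n y" "finite S"
  shows "mnm n (\<lambda>k. u k - vs S k) y = mnm n u y * (\<Prod>a\<in>S. mnm n (\<lambda>k. - a k) y)"
proof -
  have "mnm n (\<lambda>k. u k - vs S k) y = mnm n (\<lambda>k. u k + (\<Sum>a\<in>S. - a k)) y"
    unfolding vs_def by (simp add: sum_negf)
  also have "\<dots> = mnm n u y * mnm n (\<lambda>k. \<Sum>a\<in>S. - a k) y" by (rule mnm_add[OF assms(1)])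
  also have "mnm n (\<lambda>k. \<Sum>a\<in>S. - a k) y = (\<Prod>a\<in>S. mnm n (\<lambda>k. - a k) y)"
    by (rule mnm_sum[OF assms])
  finally show ?thesis .
qed

definition ev :: "nat \<Rightarrow> 'x set \<Rightarrow> ('x \<Rightarrow> int) \<Rightarrow> ('x \<Rightarrow> nat \<Rightarrow> int) \<Rightarrow> (nat \<Rightarrow> real) \<Rightarrow> real" where
  "ev n X c wt y = (\<Sum>x\<in>X. of_int (c x) * mnm n (wt x) y)"

lemma ev_Top:
  assumes fin: "finite X" and y: "nzy n y"
  shows "ev n (X \<times> Pow (posroots n)) (\<lambda>p. (-1) ^ card (snd p) * c (fst p))
          (\<lambda>p k. wt (fst p) k - vs (snd p) k) y
       = ev n X c wt y * (\<Prod>a\<in>posroots n. 1 - mnm n (\<lambda>k. - a k) y)"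
proof -
  have "ev n (X \<times> Pow (posroots n)) (\<lambda>p. (-1) ^ card (snd p) * c (fst p))
          (\<lambda>p k. wt (fst p) k - vs (snd p) k) y
      = (\<Sum>x\<in>X. \<Sum>S\<in>Pow (posroots n). (-1) ^ card S * of_int (c x) *
           (mnm n (wt x) y * (\<Prod>a\<in>S. mnm n (\<lambda>k. - a k) y)))"
    unfolding ev_def sum.cartesian_product'
  proof (intro sum.cong refl)
    fix x S assume "S \<in> Pow (posroots n)"
    hence "finite S" by (meson PowD finite_posroots finite_subset)
    thus "of_int ((-1) ^ card (snd (x, S)) * c (fst (x, S))) * mnm n (\<lambda>k. wt (fst (x, S)) k - vs (snd (x, S)) k) y =
          (-1) ^ card S * of_int (c x) * (mnm n (wt x) y * (\<Prod>a\<in>S. mnm n (\<lambda>k. - a k) y))"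
      using mnm_minus_vs[OF y, of S "wt x"] by simp
  qed
  also have "\<dots> = (\<Sum>x\<in>X. of_int (c x) * mnm n (wt x) y *
        (\<Sum>S\<in>Pow (posroots n). (-1) ^ card S * (\<Prod>a\<in>S. mnm n (\<lambda>k. - a k) y)))"
    by (simp add: sum_distrib_left algebra_simps)
  also have "(\<Sum>S\<in>Pow (posroots n). (-1) ^ card S * (\<Prod>a\<in>S. mnm n (\<lambda>k. - a k) y))
      = (\<Prod>a\<in>posroots n. 1 - mnm n (\<lambda>k. - a k) y)"
    using prod_diff_conv_sum[of "posroots n" "\<lambda>_. 1" "\<lambda>a. mnm n (\<lambda>k. - a k) y"] by simp
  finally show ?thesis unfolding ev_def by (simp add: sum_distrib_right)
qed

section \<open>Uniqueness via a one-parameter specialization\<close>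

definition yT :: "nat \<Rightarrow> real \<Rightarrow> nat \<Rightarrow> real" where
  "yT Bb T = (\<lambda>i. T ^ (Bb ^ i))"

definition psi :: "nat \<Rightarrow> nat \<Rightarrow> (nat \<Rightarrow> int) \<Rightarrow> int" where
  "psi n Bb v = (\<Sum>i=1..n. v i * int Bb ^ i)"

lemma prod_powi: "(T::real) \<noteq> 0 \<Longrightarrow> (\<Prod>i\<in>A. T powi f i) = T powi (\<Sum>i\<in>A. f i)"
  by (induction A rule: infinite_finite_induct) (auto simp: power_int_add)

lemma mnm_yT: "(T::real) > 0 \<Longrightarrow> mnm n v (yT Bb T) = T powi psi n Bb v"
proof -
  assume T: "T > 0"
  have "mnm n v (yT Bb T) = (\<Prod>i=1..n. T powi (v i * int Bb ^ i))"
    unfolding mnm_def yT_def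
  proof (intro prod.cong refl)
    fix i
    have "(T ^ (Bb ^ i)) powi v i = (T powi (int (Bb ^ i))) powi v i" by (simp only: power_int_of_nat)
    also have "\<dots> = T powi (int (Bb ^ i) * v i)" by (rule power_int_mult[symmetric])
    finally show "(T ^ (Bb ^ i)) powi v i = T powi (v i * int Bb ^ i)" by (simp add: mult.commute)
  qed
  also have "\<dots> = T powi psi n Bb v" unfolding psi_def using T by (simp add: prod_powi)
  finally show ?thesis .
qed

lemma geom_bound: "(\<Sum>i=1..n. (int B - 1) * int B ^ i) = int B ^ Suc n - int B"
  by (induction n) (auto simp: algebra_simps)

lemma digits_zero:
  fixes d :: "nat \<Rightarrow> int"
  assumes "\<forall>i\<in>{1..n}. \<bar>d i\<bar> < int B" "(\<Sum>i=1..n. d i * int B ^ i) = 0"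
  shows "\<forall>i\<in>{1..n}. d i = 0"
  using assms
proof (induction n)
  case 0 thus ?case by simp
next
  case (Suc n)
  have B: "int B \<ge> 1" using Suc.prems(1) by fastforce
  have bnd: "\<bar>\<Sum>i=1..n. d i * int B ^ i\<bar> \<le> int B ^ Suc n - int B"
  proof -
    have "\<bar>\<Sum>i=1..n. d i * int B ^ i\<bar> \<le> (\<Sum>i=1..n. \<bar>d i * int B ^ i\<bar>)" by (rule sum_abs)
    also have "\<dots> \<le> (\<Sum>i=1..n. (int B - 1) * int B ^ i)"
    proof (rule sum_mono)
      fix i assume "i \<in> {1..n}"
      hence "\<bar>d i\<bar> \<le> int B - 1" using Suc.prems(1) by fastforce
      thus "\<bar>d i * int B ^ i\<bar> \<le> (int B - 1) * int B ^ i"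
        by (simp add: abs_mult mult_right_mono)
    qed
    also have "\<dots> = int B ^ Suc n - int B" by (rule geom_bound)
    finally show ?thesis .
  qed
  have split: "(\<Sum>i=1..n. d i * int B ^ i) + d (Suc n) * int B ^ Suc n = 0"
    using Suc.prems(2) by simp
  have dS: "d (Suc n) = 0"
  proof (rule ccontr)
    assume "d (Suc n) \<noteq> 0"
    hence "\<bar>d (Suc n) * int B ^ Suc n\<bar> \<ge> int B ^ Suc n"
      using B by (simp add: abs_mult)
    moreover have "\<bar>d (Suc n) * int B ^ Suc n\<bar> = \<bar>\<Sum>i=1..n. d i * int B ^ i\<bar>"
      using split by (simp add: eq_neg_iff_add_eq_0[symmetric])
    ultimately show False using bnd B by linarith
  qed
  hence s0: "(\<Sum>i=1..n. d i * int B ^ i) = 0" using split by simp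
  have "\<forall>i\<in>{1..n}. \<bar>d i\<bar> < int B" using Suc.prems(1) by simp
  hence "\<forall>i\<in>{1..n}. d i = 0" using Suc.IH s0 by blast
  thus ?case using dS by (auto simp: le_Suc_eq)
qed

definition box :: "nat \<Rightarrow> int \<Rightarrow> (nat \<Rightarrow> int) set" where
  "box n C = {v. (\<forall>i. i \<notin> {1..n} \<longrightarrow> v i = 0) \<and> (\<forall>i. \<bar>v i\<bar> \<le> C)}"

lemma psi_inj:
  assumes "u \<in> box n C" "v \<in> box n C" "2 * C < int Bb" "psi n Bb u = psi n Bb v"
  shows "u = v"
proof -
  have "(\<Sum>i=1..n. (u i - v i) * int Bb ^ i) = 0"
    using assms(4) unfolding psi_def by (simp add: left_diff_distrib sum_subtractf)
  moreover have "\<forall>i\<in>{1..n}. \<bar>u i - v i\<bar> < int Bb"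
  proof
    fix i
    have "\<bar>u i\<bar> \<le> C" "\<bar>v i\<bar> \<le> C" using assms(1,2) unfolding box_def by auto
    thus "\<bar>u i - v i\<bar> < int Bb" using assms(3) by linarith
  qed
  ultimately have "\<forall>i\<in>{1..n}. u i - v i = 0" by (intro digits_zero) auto
  thus ?thesis using assms(1,2) unfolding box_def by (auto simp: fun_eq_iff)
qed

lemma ev_group:
  assumes "finite X" "T > 0"
  shows "ev n X c wt (yT Bb T) =
    (\<Sum>e\<in>psi n Bb ` wt ` X. of_int (\<Sum>x\<in>{x\<in>X. psi n Bb (wt x) = e}. c x) * T powi e)"
proof -
  have "ev n X c wt (yT Bb T) = (\<Sum>x\<in>X. of_int (c x) * T powi psi n Bb (wt x))"
    unfolding ev_def using mnm_yT[OF assms(2)] by simp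
  also have "\<dots> = (\<Sum>e\<in>(\<lambda>x. psi n Bb (wt x)) ` X. \<Sum>x\<in>{x\<in>X. psi n Bb (wt x) = e}. of_int (c x) * T powi psi n Bb (wt x))"
    by (rule sum.image_gen[OF assms(1)])
  also have "\<dots> = (\<Sum>e\<in>psi n Bb ` wt ` X. of_int (\<Sum>x\<in>{x\<in>X. psi n Bb (wt x) = e}. c x) * T powi e)"
    by (simp add: image_image sum_distrib_right)
  finally show ?thesis .
qed

lemma coefs_unique:
  assumes fX: "finite X" and fY: "finite Y"
    and bX: "\<forall>x\<in>X. wt x \<in> box n C" and bY: "\<forall>y\<in>Y. wt' y \<in> box n C"
    and B: "2 * C < int Bb"
    and eq: "\<forall>T>1. ev n X c wt (yT Bb T) = ev n Y d wt' (yT Bb T)"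
  shows "coefs X c wt = coefs Y d wt'"
proof
  fix mu
  define a where "a e = (\<Sum>x\<in>{x\<in>X. psi n Bb (wt x) = e}. c x)" for e
  define b where "b e = (\<Sum>x\<in>{x\<in>Y. psi n Bb (wt' x) = e}. d x)" for e
  have ab: "real_of_int (a e) = real_of_int (b e)" for e
  proof -
    have "(if e \<in> psi n Bb ` wt ` X then real_of_int (a e) else 0) =
          (if e \<in> psi n Bb ` wt' ` Y then real_of_int (b e) else 0)"
      by (rule laurent_eq) (use fX fY eq ev_group[OF fX] ev_group[OF fY] in \<open>auto simp: a_def b_def\<close>)
    moreover have "e \<notin> psi n Bb ` wt ` X \<Longrightarrow> a e = 0" unfolding a_def
      by (rule sum.neutral) auto
    moreover have "e \<notin> psi n Bb ` wt' ` Y \<Longrightarrow> b e = 0" unfolding b_def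
      by (rule sum.neutral) auto
    ultimately show ?thesis by (auto split: if_splits)
  qed
  show "coefs X c wt mu = coefs Y d wt' mu"
  proof (cases "mu \<in> box n C")
    case True
    have "{x\<in>X. wt x = mu} = {x\<in>X. psi n Bb (wt x) = psi n Bb mu}"
      using psi_inj[OF _ True B] bX by auto
    moreover have "{x\<in>Y. wt' x = mu} = {x\<in>Y. psi n Bb (wt' x) = psi n Bb mu}"
      using psi_inj[OF _ True B] bY by auto
    moreover have "a (psi n Bb mu) = b (psi n Bb mu)" using ab[of "psi n Bb mu"] by (simp only: of_int_eq_iff)
    ultimately show ?thesis unfolding coefs_def a_def b_def by simp
  next
    case False
    hence e1: "{x\<in>X. wt x = mu} = {}" and e2: "{x\<in>Y. wt' x = mu} = {}" using bX bY by auto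
    show ?thesis unfolding coefs_def e1 e2 by simp
  qed
qed

lemma perm_shift:
  assumes "\<sigma> permutes {1..(n::nat)}"
  shows "sign (\<lambda>x. if x \<in> {0..<n} then \<sigma> (Suc x) - 1 else x) = sign \<sigma>
       \<and> (\<lambda>x. if x \<in> {0..<n} then \<sigma> (Suc x) - 1 else x) permutes {0..<n}"
proof -
  interpret I: permutes_bij_finite \<sigma> "{1..n}" "{0..<n}" "\<lambda>x. x - 1" Suc
    "\<lambda>x. if x \<in> {0..<n} then \<sigma> (Suc x) - 1 else x"
  proof unfold_locales
    show "bij_betw (\<lambda>x. x - 1) {1..n} {0..<n}"
      by (rule bij_betw_byWitness[of _ Suc]) auto
  qed (use assms in auto)
  show ?thesis using I.sign_p' I.permutes_p' by simp
qed

lemma perm_unshift: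
  assumes "p permutes {0..<(n::nat)}"
  shows "(\<lambda>x. if x \<in> {1..n} then Suc (p (x - 1)) else x) permutes {1..n}"
proof -
  interpret I: permutes_bij_finite p "{0..<n}" "{1..n}" Suc "\<lambda>x. x - 1"
    "\<lambda>x. if x \<in> {1..n} then Suc (p (x - 1)) else x"
  proof unfold_locales
    show "bij_betw Suc {0..<n} {1..n}"
      by (rule bij_betw_byWitness[of _ "\<lambda>x. x - 1"]) auto
  qed (use assms in auto)
  show ?thesis using I.permutes_p' by simp
qed

lemma leibniz_shift:
  fixes f :: "nat \<Rightarrow> nat \<Rightarrow> real"
  shows "det (mat n n (\<lambda>(i,j). f (Suc i) (Suc j))) =
         (\<Sum>\<sigma>\<in>{\<sigma>. \<sigma> permutes {1..n}}. of_int (sign \<sigma>) * (\<Prod>i=1..n. f i (\<sigma> i)))"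
proof -
  define Phi where "Phi \<sigma> = (\<lambda>x. if x \<in> {0..<n} then \<sigma> (Suc x) - 1 else x)" for \<sigma> :: "nat \<Rightarrow> nat"
  define Psi where "Psi p = (\<lambda>x. if x \<in> {1..n} then Suc (p (x - 1)) else x)" for p :: "nat \<Rightarrow> nat"
  have bij: "bij_betw Phi {\<sigma>. \<sigma> permutes {1..n}} {p. p permutes {0..<n}}"
  proof (rule bij_betw_byWitness[of _ Psi])
    show "\<forall>\<sigma>\<in>{\<sigma>. \<sigma> permutes {1..n}}. Psi (Phi \<sigma>) = \<sigma>"
    proof safe
      fix \<sigma> assume s: "\<sigma> permutes {1..n}"
      show "Psi (Phi \<sigma>) = \<sigma>"
      proof
        fix x
        show "Psi (Phi \<sigma>) x = \<sigma> x"
        proof (cases "x \<in> {1..n}")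
          case True
          hence "\<sigma> x \<in> {1..n}" using permutes_in_image[OF s] by blast
          thus ?thesis using True unfolding Psi_def Phi_def by auto
        next
          case False thus ?thesis using s permutes_not_in[OF s False] unfolding Psi_def Phi_def by auto
        qed
      qed
    qed
    show "\<forall>p\<in>{p. p permutes {0..<n}}. Phi (Psi p) = p"
    proof safe
      fix p assume s: "p permutes {0..<n}"
      show "Phi (Psi p) = p"
      proof
        fix x
        show "Phi (Psi p) x = p x"
        proof (cases "x \<in> {0..<n}")
          case True
          hence "p x \<in> {0..<n}" using permutes_in_image[OF s] by blast
          thus ?thesis using True unfolding Psi_def Phi_def by auto
        next
          case False thus ?thesis using s permutes_not_in[OF s False] unfolding Psi_def Phi_def by auto
        qed
      qed
    qed
    show "Phi ` {\<sigma>. \<sigma> permutes {1..n}} \<subseteq> {p. p permutes {0..<n}}"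
      using perm_shift unfolding Phi_def by auto
    show "Psi ` {p. p permutes {0..<n}} \<subseteq> {\<sigma>. \<sigma> permutes {1..n}}"
      using perm_unshift unfolding Psi_def by auto
  qed
  have "det (mat n n (\<lambda>(i,j). f (Suc i) (Suc j))) =
     (\<Sum>p\<in>{p. p permutes {0..<n}}. signof p * (\<Prod>i=0..<n. f (Suc i) (Suc (p i))))"
    by (subst det_def'[of _ n]) auto
  also have "\<dots> = (\<Sum>\<sigma>\<in>{\<sigma>. \<sigma> permutes {1..n}}. signof (Phi \<sigma>) * (\<Prod>i=0..<n. f (Suc i) (Suc (Phi \<sigma> i))))"
    by (rule sum.reindex_bij_betw[OF bij, symmetric])
  also have "\<dots> = (\<Sum>\<sigma>\<in>{\<sigma>. \<sigma> permutes {1..n}}. of_int (sign \<sigma>) * (\<Prod>i=1..n. f i (\<sigma> i)))"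
  proof (intro sum.cong refl)
    fix \<sigma> assume s: "\<sigma> \<in> {\<sigma>. \<sigma> permutes {1..n}}"
    have sg: "sign (Phi \<sigma>) = sign \<sigma>" using perm_shift s unfolding Phi_def by auto
    have "(\<Prod>i=0..<n. f (Suc i) (Suc (Phi \<sigma> i))) = (\<Prod>i=0..<n. f (Suc i) (\<sigma> (Suc i)))"
    proof (intro prod.cong refl)
      fix i assume "i \<in> {0..<n}"
      moreover hence "\<sigma> (Suc i) \<in> {1..n}" using permutes_in_image[of \<sigma> "{1..n}" "Suc i"] s by auto
      ultimately show "f (Suc i) (Suc (Phi \<sigma> i)) = f (Suc i) (\<sigma> (Suc i))" unfolding Phi_def by auto
    qed
    also have "\<dots> = (\<Prod>i=1..n. f i (\<sigma> i))"
    proof -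
      have "(\<Prod>i=1..n. f i (\<sigma> i)) = (\<Prod>i\<in>{Suc 0..<Suc n}. f i (\<sigma> i))"
        by (simp add: atLeastLessThanSuc_atLeastAtMost)
      also have "\<dots> = (\<Prod>i=0..<n. f (Suc i) (\<sigma> (Suc i)))"
        by (rule prod.shift_bounds_Suc_ivl)
      finally show ?thesis by simp
    qed
    finally show "signof (Phi \<sigma>) * (\<Prod>i=0..<n. f (Suc i) (Suc (Phi \<sigma> i))) =
        of_int (sign \<sigma>) * (\<Prod>i=1..n. f i (\<sigma> i))" using sg by simp
  qed
  finally show ?thesis .
qed

definition mexp :: "nat \<Rightarrow> nat \<Rightarrow> nat \<Rightarrow> nat" where
  "mexp n s k = n - k + 1 + (if k \<le> s then 1 else 0)"

abbreviation lamB :: "nat \<Rightarrow> nat \<Rightarrow> nat \<Rightarrow> int" where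
  "lamB n s \<equiv> (\<lambda>j. omega2 n n j + omegat2 n s j)"

lemma LL_val:
  assumes "s \<le> n" "k \<in> {1..n}"
  shows "LL n (lamB n s) k = 2 * int (mexp n s k)"
proof -
  have om: "omegat2 n s k = (if k \<le> s then 2 else 0)"
    using assms unfolding omegat2_def omega2_def by auto
  have "LL n (lamB n s) k = 1 + (if k \<le> s then 2 else 0) + (2 * (int n - int k) + 1)"
    unfolding LL_def using assms by (simp add: om omega2_def rho2_def)
  also have "\<dots> = 2 * int (mexp n s k)"
    unfolding mexp_def using assms by (auto simp: of_nat_diff)
  finally show ?thesis .
qed

lemma LL_out: "k \<notin> {1..n} \<Longrightarrow> LL n (lamB n s) k = 0"
  unfolding LL_def omegat2_def omega2_def rho2_def by auto

lemma mexp_exd: "j < n \<Longrightarrow> mexp n s (Suc j) = exd n s j"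
  unfolding mexp_def exd_def by auto

definition pos :: "nat \<Rightarrow> (nat \<Rightarrow> real) \<Rightarrow> bool" where
  "pos n y \<longleftrightarrow> (\<forall>i\<in>{1..n}. y i > 0)"

lemma pos_nzy: "pos n y \<Longrightarrow> nzy n y"
  unfolding pos_def nzy_def by auto

lemma prod_if_split:
  assumes "finite A" "F \<subseteq> A"
  shows "(\<Prod>i\<in>A. if i \<in> F then b i else a i) = prod b F * prod a (A - F)"
proof -
  have "(\<Prod>i\<in>A. if i \<in> F then b i else a i) = prod b (A \<inter> {i. i \<in> F}) * prod a (A \<inter> - {i. i \<in> F})"
    by (rule prod.If_cases[OF assms(1)])
  also have "A \<inter> {i. i \<in> F} = F" using assms(2) by auto
  also have "A \<inter> - {i. i \<in> F} = A - F" by auto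
  finally show ?thesis .
qed

lemma powi_pm:
  fixes y :: real
  assumes "y > 0"
  shows "y powi ((if b then -1 else 1) * (2 * int m)) = (if b then (1 / y ^ 2) ^ m else (y ^ 2) ^ m)"
proof (cases b)
  case True
  have "y powi (- (2 * int m)) = inverse (y powi (2 * int m))" by (rule power_int_minus)
  also have "y powi (2 * int m) = (y ^ 2) ^ m"
    by (simp add: power_int_mult power_mult)
  finally show ?thesis using True by (simp add: power_one_over divide_inverse power_inverse)
next
  case False thus ?thesis by (simp add: power_int_mult power_mult)
qed

lemma evN:
  assumes sn: "s \<le> n" and y: "pos n y"
  shows "ev n (weylB n) wsgn (\<lambda>w k. wact w (LL n (lamB n s)) k - rho2 n k) y
       = Cd n (\<lambda>i. y i ^ 2) s / mnm n (rho2 n) y"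
proof -
  define L where "L = LL n (lamB n s)"
  define x where "x = (\<lambda>i. y i ^ 2)"
  have nz: "nzy n y" using pos_nzy[OF y] .
  have m1: "mnm n (\<lambda>k. wact w L k - rho2 n k) y = mnm n (wact w L) y / mnm n (rho2 n) y" for w
    using mnm_add[OF nz, of "wact w L" "\<lambda>k. - rho2 n k"] mnm_uminus[OF nz, of "rho2 n"] by simp
  have "ev n (weylB n) wsgn (\<lambda>w k. wact w L k - rho2 n k) y
      = (\<Sum>w\<in>weylB n. of_int (wsgn w) * mnm n (wact w L) y) / mnm n (rho2 n) y"
    unfolding ev_def m1 by (simp add: sum_divide_distrib)
  also have "(\<Sum>w\<in>weylB n. of_int (wsgn w) * mnm n (wact w L) y)
     = (\<Sum>\<sigma>\<in>{\<sigma>. \<sigma> permutes {1..n}}. of_int (sign \<sigma>) * (\<Prod>i=1..n. gp (mexp n s (\<sigma> i)) (x i)))"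
  proof -
    have "(\<Sum>w\<in>weylB n. of_int (wsgn w) * mnm n (wact w L) y)
       = (\<Sum>\<sigma>\<in>{\<sigma>. \<sigma> permutes {1..n}}. \<Sum>F\<in>Pow {1..n}. of_int (sign \<sigma>) * ((-1) ^ card F *
            (\<Prod>i=1..n. if i \<in> F then (1 / x i) ^ mexp n s (\<sigma> i) else x i ^ mexp n s (\<sigma> i))))"
      unfolding weylB_eq sum.cartesian_product'
    proof (intro sum.cong refl)
      fix \<sigma> F assume s: "\<sigma> \<in> {\<sigma>. \<sigma> permutes {1..n}}" and F: "F \<in> Pow {1..n}"
      have "mnm n (wact (\<sigma>, F) L) y = (\<Prod>i=1..n. if i \<in> F then (1 / x i) ^ mexp n s (\<sigma> i) else x i ^ mexp n s (\<sigma> i))"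
        unfolding mnm_def wact_def
      proof (intro prod.cong refl)
        fix i assume i: "i \<in> {1..n}"
        hence si: "\<sigma> i \<in> {1..n}" using permutes_in_image[of \<sigma> "{1..n}" i] s by auto
        have "y i powi ((if i \<in> snd (\<sigma>, F) then -1 else 1) * L (fst (\<sigma>, F) i))
            = y i powi ((if i \<in> F then -1 else 1) * (2 * int (mexp n s (\<sigma> i))))"
          using LL_val[OF sn si] unfolding L_def by simp
        also have "\<dots> = (if i \<in> F then (1 / x i) ^ mexp n s (\<sigma> i) else x i ^ mexp n s (\<sigma> i))"
          unfolding x_def by (rule powi_pm) (use y i in \<open>auto simp: pos_def\<close>)
        finally show "y i powi ((if i \<in> snd (\<sigma>, F) then -1 else 1) * L (fst (\<sigma>, F) i)) =
            (if i \<in> F then (1 / x i) ^ mexp n s (\<sigma> i) else x i ^ mexp n s (\<sigma> i))" .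
      qed
      thus "of_int (wsgn (\<sigma>, F)) * mnm n (wact (\<sigma>, F) L) y =
        of_int (sign \<sigma>) * ((-1) ^ card F *
            (\<Prod>i=1..n. if i \<in> F then (1 / x i) ^ mexp n s (\<sigma> i) else x i ^ mexp n s (\<sigma> i)))"
        unfolding wsgn_def by simp
    qed
    also have "\<dots> = (\<Sum>\<sigma>\<in>{\<sigma>. \<sigma> permutes {1..n}}. of_int (sign \<sigma>) * (\<Prod>i=1..n. gp (mexp n s (\<sigma> i)) (x i)))"
    proof (intro sum.cong refl)
      fix \<sigma> assume "\<sigma> \<in> {\<sigma>. \<sigma> permutes {1..n}}"
      have "(\<Prod>i=1..n. gp (mexp n s (\<sigma> i)) (x i)) =
        (\<Sum>F\<in>Pow {1..n}. (-1) ^ card F * prod (\<lambda>i. (1 / x i) ^ mexp n s (\<sigma> i)) F *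
           prod (\<lambda>i. x i ^ mexp n s (\<sigma> i)) ({1..n} - F))"
        unfolding gp_def by (rule prod_diff_conv_sum) simp
      also have "\<dots> = (\<Sum>F\<in>Pow {1..n}. (-1) ^ card F *
            (\<Prod>i=1..n. if i \<in> F then (1 / x i) ^ mexp n s (\<sigma> i) else x i ^ mexp n s (\<sigma> i)))"
        by (intro sum.cong refl) (subst prod_if_split, auto)
      finally show "(\<Sum>F\<in>Pow {1..n}. of_int (sign \<sigma>) * ((-1) ^ card F *
            (\<Prod>i=1..n. if i \<in> F then (1 / x i) ^ mexp n s (\<sigma> i) else x i ^ mexp n s (\<sigma> i)))) =
          of_int (sign \<sigma>) * (\<Prod>i=1..n. gp (mexp n s (\<sigma> i)) (x i))"
        by (simp add: sum_distrib_left)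
    qed
    finally show ?thesis .
  qed
  also have "\<dots> = det (mat n n (\<lambda>(i,j). gp (mexp n s (Suc j)) (x (Suc i))))"
    by (rule leibniz_shift[where f = "\<lambda>i j. gp (mexp n s j) (x i)", symmetric])
  also have "mat n n (\<lambda>(i,j). gp (mexp n s (Suc j)) (x (Suc i))) = dmat n (exd n s) x"
    unfolding dmat_def by (rule eq_matI) (auto simp: mexp_exd)
  finally show ?thesis unfolding Cd_def L_def x_def by simp
qed

section \<open>The candidate character K\<close>

definition XK :: "nat \<Rightarrow> nat \<Rightarrow> (nat set \<times> (nat \<times> bool) set) set" where
  "XK n s = Pow {1..n} \<times> {B. B \<subseteq> Jn n \<and> (card B = s \<or> (2 \<le> s \<and> card B = s - 2))}"

definition cK :: "nat \<Rightarrow> nat set \<times> (nat \<times> bool) set \<Rightarrow> int" where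
  "cK s p = (if card (snd p) = s then 1 else -1)"

definition wtK :: "nat \<Rightarrow> nat set \<times> (nat \<times> bool) set \<Rightarrow> nat \<Rightarrow> int" where
  "wtK n p = (\<lambda>i. if i \<in> {1..n} then (if i \<in> fst p then -1 else 1)
      + 2 * (of_bool ((i, True) \<in> snd p) - of_bool ((i, False) \<in> snd p)) else 0)"

lemma finite_XK [simp]: "finite (XK n s)"
proof -
  have "{B. B \<subseteq> Jn n \<and> (card B = s \<or> (2 \<le> s \<and> card B = s - 2))} \<subseteq> Pow (Jn n)" by auto
  hence "finite {B. B \<subseteq> Jn n \<and> (card B = s \<or> (2 \<le> s \<and> card B = s - 2))}"
    by (rule finite_subset) simp
  thus ?thesis unfolding XK_def by simp
qed

lemma powi3:
  fixes y :: real
  assumes "y > 0"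
  shows "y powi ((if f then -1 else 1) + 2 * (of_bool t - of_bool u))
       = (if f then 1/y else y) * ((if t then y^2 else 1) * (if u then 1/y^2 else 1))"
  using assms by (cases f; cases t; cases u) (simp_all add: power_int_def field_simps power2_eq_square power3_eq_cube power_inverse)

lemma prod_valx:
  assumes "B \<subseteq> Jn n"
  shows "(\<Prod>b\<in>B. valx x b) = (\<Prod>i=1..n. (if (i, True) \<in> B then x i else 1) * (if (i, False) \<in> B then 1 / x i else 1))"
proof -
  have "(\<Prod>b\<in>B. valx x b) = (\<Prod>b\<in>Jn n \<inter> B. valx x b)" using assms by (simp add: Int_absorb1)
  also have "\<dots> = (\<Prod>b\<in>Jn n. if b \<in> B then valx x b else 1)"
    by (rule prod.inter_restrict) simp
  also have "\<dots> = (\<Prod>i=1..n. \<Prod>\<beta>\<in>UNIV. if (i, \<beta>) \<in> B then valx x (i, \<beta>) else 1)"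
    unfolding Jn_def by (rule prod.cartesian_product')
  also have "\<dots> = (\<Prod>i=1..n. (if (i, True) \<in> B then x i else 1) * (if (i, False) \<in> B then 1 / x i else 1))"
    by (intro prod.cong refl) (simp add: UNIV_bool valx_def)
  finally show ?thesis .
qed

lemma mnm_wtK:
  assumes y: "pos n y" and F: "F \<subseteq> {1..n}" and B: "B \<subseteq> Jn n"
  shows "mnm n (wtK n (F, B)) y = (\<Prod>i=1..n. if i \<in> F then 1 / y i else y i) * (\<Prod>b\<in>B. valx (\<lambda>i. y i ^ 2) b)"
proof -
  have "mnm n (wtK n (F, B)) y = (\<Prod>i=1..n. (if i \<in> F then 1 / y i else y i) *
       ((if (i, True) \<in> B then y i ^ 2 else 1) * (if (i, False) \<in> B then 1 / y i ^ 2 else 1)))"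
    unfolding mnm_def
  proof (intro prod.cong refl)
    fix i assume i: "i \<in> {1..n}"
    hence yi: "y i > 0" using y unfolding pos_def by auto
    show "y i powi wtK n (F, B) i = (if i \<in> F then 1 / y i else y i) *
       ((if (i, True) \<in> B then y i ^ 2 else 1) * (if (i, False) \<in> B then 1 / y i ^ 2 else 1))"
      using powi3[OF yi, of "i \<in> F" "(i, True) \<in> B" "(i, False) \<in> B"] i unfolding wtK_def by simp
  qed
  also have "\<dots> = (\<Prod>i=1..n. if i \<in> F then 1 / y i else y i) * (\<Prod>b\<in>B. valx (\<lambda>i. y i ^ 2) b)"
    unfolding prod_valx[OF B] by (simp add: prod.distrib)
  finally show ?thesis .
qed

lemma Ecoef_sum: "Ecoef n x k = (\<Sum>B\<in>{B. B \<subseteq> Jn n \<and> card B = k}. \<Prod>b\<in>B. valx x b)"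
  unfolding Ecoef_def by (rule coeff_prod_lin) simp

lemma evK:
  assumes y: "pos n y"
  shows "ev n (XK n s) (cK s) (wtK n) y = (\<Prod>i=1..n. y i + 1 / y i) *
      (Ecoef n (\<lambda>i. y i ^ 2) s - (if 2 \<le> s then Ecoef n (\<lambda>i. y i ^ 2) (s - 2) else 0))"
proof -
  define x where "x = (\<lambda>i. y i ^ 2)"
  define Bs where "Bs = {B. B \<subseteq> Jn n \<and> (card B = s \<or> (2 \<le> s \<and> card B = s - 2))}"
  define PF where "PF F = (\<Prod>i=1..n. if i \<in> F then 1 / y i else y i)" for F
  define PB where "PB B = (\<Prod>b\<in>B. valx x b)" for B
  have "ev n (XK n s) (cK s) (wtK n) y = (\<Sum>F\<in>Pow {1..n}. \<Sum>B\<in>Bs. of_int (cK s (F, B)) * (PF F * PB B))"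
    unfolding ev_def XK_def Bs_def[symmetric] sum.cartesian_product'
    by (intro sum.cong refl) (auto simp: mnm_wtK[OF y] PF_def PB_def x_def Bs_def)
  also have "\<dots> = (\<Sum>F\<in>Pow {1..n}. PF F) * (\<Sum>B\<in>Bs. of_int (cK s (F, B)) * PB B)"
    unfolding sum_product by (intro sum.cong refl) (simp add: cK_def algebra_simps)
  also have "(\<Sum>F\<in>Pow {1..n}. PF F) = (\<Prod>i=1..n. y i + 1 / y i)"
  proof -
    have "(\<Prod>i=1..n. 1 / y i + y i) = (\<Sum>F\<in>Pow {1..n}. prod (\<lambda>i. 1 / y i) F * prod y ({1..n} - F))"
      by (rule prod_add) simp
    also have "\<dots> = (\<Sum>F\<in>Pow {1..n}. PF F)"
      unfolding PF_def by (intro sum.cong refl) (subst prod_if_split, auto)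
    finally show ?thesis by (simp add: add.commute)
  qed
  also have "(\<Sum>B\<in>Bs. of_int (cK s (F, B)) * PB B) = Ecoef n x s - (if 2 \<le> s then Ecoef n x (s - 2) else 0)"
  proof (cases "2 \<le> s")
    case True
    have "Bs = {B. B \<subseteq> Jn n \<and> card B = s} \<union> {B. B \<subseteq> Jn n \<and> card B = s - 2}"
      unfolding Bs_def using True by auto
    moreover have "finite {B. B \<subseteq> Jn n \<and> card B = s}" "finite {B. B \<subseteq> Jn n \<and> card B = s - 2}"
      by (rule finite_subset[of _ "Pow (Jn n)"], auto)+
    moreover have "{B. B \<subseteq> Jn n \<and> card B = s} \<inter> {B. B \<subseteq> Jn n \<and> card B = s - 2} = {}"
      using True by auto
    ultimately have "(\<Sum>B\<in>Bs. of_int (cK s (F, B)) * PB B)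
       = (\<Sum>B\<in>{B. B \<subseteq> Jn n \<and> card B = s}. of_int (cK s (F, B)) * PB B)
       + (\<Sum>B\<in>{B. B \<subseteq> Jn n \<and> card B = s - 2}. of_int (cK s (F, B)) * PB B)"
      by (simp add: sum.union_disjoint)
    also have "(\<Sum>B\<in>{B. B \<subseteq> Jn n \<and> card B = s}. of_int (cK s (F, B)) * PB B) = Ecoef n x s"
      unfolding Ecoef_sum PB_def cK_def by (intro sum.cong refl) auto
    also have "(\<Sum>B\<in>{B. B \<subseteq> Jn n \<and> card B = s - 2}. of_int (cK s (F, B)) * PB B) = - Ecoef n x (s - 2)"
      unfolding Ecoef_sum PB_def cK_def using True by (simp add: sum_negf[symmetric])
    finally show ?thesis using True by simp
  next
    case False
    hence "Bs = {B. B \<subseteq> Jn n \<and> card B = s}" unfolding Bs_def by auto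
    thus ?thesis unfolding Ecoef_sum PB_def cK_def using False by simp
  qed
  finally show ?thesis unfolding x_def by simp
qed

lemma rmi_val: "i \<noteq> j \<Longrightarrow> rmi i j k = (if k = i then 2 else if k = j then -2 else 0)"
  unfolding rmi_def eps2_def by auto
lemma rpl_val: "i \<noteq> j \<Longrightarrow> rpl i j k = (if k = i then 2 else if k = j then 2 else 0)"
  unfolding rpl_def eps2_def by auto

lemma inj_rmi: "inj_on (\<lambda>p. rmi (fst p) (snd p)) (Pn n)"
proof (rule inj_onI)
  fix p q assume p: "p \<in> Pn n" and q: "q \<in> Pn n" and e: "rmi (fst p) (snd p) = rmi (fst q) (snd q)"
  obtain i j where pij: "p = (i, j)" "i < j" using p unfolding Pn_def by auto
  obtain i' j' where qij: "q = (i', j')" "i' < j'" using q unfolding Pn_def by auto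
  have e': "rmi i j k = rmi i' j' k" for k using e pij qij by simp
  have "rmi i' j' i = 2" using e'[of i] rmi_val[of i j] pij by simp
  hence "i = i'" using rmi_val[of i' j'] qij by (auto split: if_splits)
  have "rmi i' j' j = -2" using e'[of j] rmi_val[of i j] pij by simp
  hence "j = j'" using rmi_val[of i' j'] qij by (auto split: if_splits)
  show "p = q" using pij qij \<open>i = i'\<close> \<open>j = j'\<close> by simp
qed

lemma inj_rpl: "inj_on (\<lambda>p. rpl (fst p) (snd p)) (Pn n)"
proof (rule inj_onI)
  fix p q assume p: "p \<in> Pn n" and q: "q \<in> Pn n" and e: "rpl (fst p) (snd p) = rpl (fst q) (snd q)"
  obtain i j where pij: "p = (i, j)" "i < j" using p unfolding Pn_def by auto
  obtain i' j' where qij: "q = (i', j')" "i' < j'" using q unfolding Pn_def by auto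
  have e': "rpl i j k = rpl i' j' k" for k using e pij qij by simp
  have a: "rpl i' j' i = 2" using e'[of i] rpl_val[of i j] pij by simp
  have b: "rpl i' j' j = 2" using e'[of j] rpl_val[of i j] pij by simp
  have c: "rpl i j i' = 2" using e'[of i'] rpl_val[of i' j'] qij by simp
  have d: "rpl i j j' = 2" using e'[of j'] rpl_val[of i' j'] qij by simp
  have "i \<in> {i', j'}" "j \<in> {i', j'}" "i' \<in> {i, j}" "j' \<in> {i, j}"
    using a b c d rpl_val[of i' j'] rpl_val[of i j] pij qij by (auto split: if_splits)
  hence "i = i' \<and> j = j'" using pij qij by auto
  thus "p = q" using pij qij by simp
qed

lemma inj_eps2: "inj_on eps2 {1..n}"
proof (rule inj_onI)
  fix i j assume "eps2 i = eps2 j"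
  hence "eps2 i i = eps2 j i" by simp
  thus "i = j" unfolding eps2_def by (auto split: if_splits)
qed

lemma disj1: "(\<lambda>p. rmi (fst p) (snd p)) ` Pn n \<inter> (\<lambda>p. rpl (fst p) (snd p)) ` Pn n = {}"
proof (rule ccontr)
  assume "\<not> ?thesis"
  then obtain i j i' j' where "i < j" "i' < j'" "rmi i j = rpl i' j'" unfolding Pn_def by auto
  hence "rmi i j j = rpl i' j' j" by simp
  thus False using rmi_val[of i j j] rpl_val[of i' j' j] \<open>i < j\<close> \<open>i' < j'\<close> by (auto split: if_splits)
qed

lemma disj2: "((\<lambda>p. rmi (fst p) (snd p)) ` Pn n \<union> (\<lambda>p. rpl (fst p) (snd p)) ` Pn n) \<inter> eps2 ` {1..n} = {}"
proof (rule ccontr)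
  assume "\<not> ?thesis"
  then obtain l where "eps2 l \<in> (\<lambda>p. rmi (fst p) (snd p)) ` Pn n \<union> (\<lambda>p. rpl (fst p) (snd p)) ` Pn n" by auto
  then obtain i j where ij: "i < j" and e0: "eps2 l = rmi i j \<or> eps2 l = rpl i j" unfolding Pn_def by auto
  from e0 show False
  proof
    assume "eps2 l = rmi i j"
    hence "eps2 l j = rmi i j j" by simp
    thus False using rmi_val[of i j j] ij unfolding eps2_def by (auto split: if_splits)
  next
    assume e: "eps2 l = rpl i j"
    hence "eps2 l j = rpl i j j" "eps2 l i = rpl i j i" by simp_all
    thus False using rpl_val[of i j] ij unfolding eps2_def by (auto split: if_splits)
  qed
qed

lemma prod_posroots:
  "(\<Prod>a\<in>posroots n. h a) = (\<Prod>p\<in>Pn n. h (rmi (fst p) (snd p)) * h (rpl (fst p) (snd p))) * (\<Prod>i=1..n. h (eps2 i))"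
proof -
  have "(\<Prod>a\<in>posroots n. h a) = (\<Prod>a\<in>(\<lambda>p. rmi (fst p) (snd p)) ` Pn n \<union> (\<lambda>p. rpl (fst p) (snd p)) ` Pn n. h a)
       * (\<Prod>a\<in>eps2 ` {1..n}. h a)"
    unfolding posroots_eq by (rule prod.union_disjoint) (use disj2 in auto)
  also have "(\<Prod>a\<in>(\<lambda>p. rmi (fst p) (snd p)) ` Pn n \<union> (\<lambda>p. rpl (fst p) (snd p)) ` Pn n. h a)
      = (\<Prod>a\<in>(\<lambda>p. rmi (fst p) (snd p)) ` Pn n. h a) * (\<Prod>a\<in>(\<lambda>p. rpl (fst p) (snd p)) ` Pn n. h a)"
    by (rule prod.union_disjoint) (use disj1 in auto)
  also have "(\<Prod>a\<in>(\<lambda>p. rmi (fst p) (snd p)) ` Pn n. h a) = (\<Prod>p\<in>Pn n. h (rmi (fst p) (snd p)))"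
    by (rule prod.reindex[OF inj_rmi, unfolded comp_def])
  also have "(\<Prod>a\<in>(\<lambda>p. rpl (fst p) (snd p)) ` Pn n. h a) = (\<Prod>p\<in>Pn n. h (rpl (fst p) (snd p)))"
    by (rule prod.reindex[OF inj_rpl, unfolded comp_def])
  also have "(\<Prod>a\<in>eps2 ` {1..n}. h a) = (\<Prod>i=1..n. h (eps2 i))"
    by (rule prod.reindex[OF inj_eps2, unfolded comp_def])
  finally show ?thesis by (simp add: prod.distrib)
qed

lemma mnm_eps2:
  assumes "i \<in> {1..n}"
  shows "mnm n (eps2 i) y = y i ^ 2"
proof -
  have "mnm n (eps2 i) y = (\<Prod>k=1..n. if k = i then y k ^ 2 else 1)"
    unfolding mnm_def eps2_def by (intro prod.cong refl) auto
  also have "\<dots> = y i ^ 2" using assms by (simp add: prod.delta)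
  finally show ?thesis .
qed

lemma mnm_neg_rmi:
  assumes y: "pos n y" and "i \<in> {1..n}" "j \<in> {1..n}"
  shows "mnm n (\<lambda>k. - rmi i j k) y = y j ^ 2 / y i ^ 2"
proof -
  have "mnm n (\<lambda>k. - rmi i j k) y = mnm n (\<lambda>k. (- eps2 i k) + eps2 j k) y"
    unfolding rmi_def by simp
  also have "\<dots> = mnm n (\<lambda>k. - eps2 i k) y * mnm n (eps2 j) y"
    by (rule mnm_add[OF pos_nzy[OF y]])
  finally show ?thesis using assms by (simp add: mnm_uminus[OF pos_nzy[OF y]] mnm_eps2)
qed

lemma mnm_neg_rpl:
  assumes y: "pos n y" and "i \<in> {1..n}" "j \<in> {1..n}"
  shows "mnm n (\<lambda>k. - rpl i j k) y = 1 / (y i ^ 2 * y j ^ 2)"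
proof -
  have "mnm n (\<lambda>k. - rpl i j k) y = mnm n (\<lambda>k. (- eps2 i k) + (- eps2 j k)) y"
    unfolding rpl_def by simp
  also have "\<dots> = mnm n (\<lambda>k. - eps2 i k) y * mnm n (\<lambda>k. - eps2 j k) y"
    by (rule mnm_add[OF pos_nzy[OF y]])
  finally show ?thesis using assms by (simp add: mnm_uminus[OF pos_nzy[OF y]] mnm_eps2)
qed

lemma mnm_rho:
  assumes y: "pos n y"
  shows "mnm n (rho2 n) y = (\<Prod>i=1..n. y i) * (\<Prod>i=1..n. \<Prod>j=Suc i..n. y i ^ 2)"
proof -
  have "mnm n (rho2 n) y = (\<Prod>i=1..n. y i * (\<Prod>j=Suc i..n. y i ^ 2))"
    unfolding mnm_def
  proof (intro prod.cong refl)
    fix i assume i: "i \<in> {1..n}"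
    have r: "rho2 n i = int (Suc (2 * (n - i)))" unfolding rho2_def using i by (auto simp: of_nat_diff)
    have "y i powi rho2 n i = y i ^ Suc (2 * (n - i))" unfolding r by (rule power_int_of_nat)
    also have "\<dots> = y i * (y i ^ 2) ^ (n - i)" by (simp add: power_mult)
    also have "(y i ^ 2) ^ (n - i) = (\<Prod>j=Suc i..n. y i ^ 2)" by simp
    finally show "y i powi rho2 n i = y i * (\<Prod>j=Suc i..n. y i ^ 2)" .
  qed
  thus ?thesis by (simp add: prod.distrib)
qed

lemma rootprod:
  assumes y: "pos n y"
  shows "mnm n (rho2 n) y * (\<Prod>a\<in>posroots n. 1 - mnm n (\<lambda>k. - a k) y)
       = (\<Prod>i=1..n. y i - 1 / y i) * (\<Prod>i=1..n. \<Prod>j=Suc i..n. zz (\<lambda>i. y i ^ 2) i - zz (\<lambda>i. y i ^ 2) j)"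
proof -
  define x where "x = (\<lambda>i. y i ^ 2)"
  have ypos: "i \<in> {1..n} \<Longrightarrow> y i > 0" for i using y unfolding pos_def by auto
  have "(\<Prod>a\<in>posroots n. 1 - mnm n (\<lambda>k. - a k) y)
     = (\<Prod>p\<in>Pn n. (1 - x (snd p) / x (fst p)) * (1 - 1 / (x (fst p) * x (snd p)))) * (\<Prod>i=1..n. 1 - 1 / x i)"
  proof -
    have A: "(\<Prod>p\<in>Pn n. (1 - mnm n (\<lambda>k. - rmi (fst p) (snd p) k) y) * (1 - mnm n (\<lambda>k. - rpl (fst p) (snd p) k) y)) =
          (\<Prod>p\<in>Pn n. (1 - x (snd p) / x (fst p)) * (1 - 1 / (x (fst p) * x (snd p))))"
    proof (intro prod.cong refl)
      fix p assume "p \<in> Pn n"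
      hence "fst p \<in> {1..n}" "snd p \<in> {1..n}" unfolding Pn_def by auto
      thus "(1 - mnm n (\<lambda>k. - rmi (fst p) (snd p) k) y) * (1 - mnm n (\<lambda>k. - rpl (fst p) (snd p) k) y) =
            (1 - x (snd p) / x (fst p)) * (1 - 1 / (x (fst p) * x (snd p)))"
        unfolding x_def by (simp add: mnm_neg_rmi[OF y] mnm_neg_rpl[OF y])
    qed
    have B: "(\<Prod>i=1..n. 1 - mnm n (\<lambda>k. - eps2 i k) y) = (\<Prod>i=1..n. 1 - 1 / x i)"
    proof (intro prod.cong refl)
      fix i assume "i \<in> {1..n}"
      thus "1 - mnm n (\<lambda>k. - eps2 i k) y = 1 - 1 / x i"
        unfolding x_def by (simp add: mnm_uminus[OF pos_nzy[OF y]] mnm_eps2)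
    qed
    show ?thesis unfolding prod_posroots[of "\<lambda>a. 1 - mnm n (\<lambda>k. - a k) y"] A B ..
  qed
  also have "(\<Prod>p\<in>Pn n. (1 - x (snd p) / x (fst p)) * (1 - 1 / (x (fst p) * x (snd p))))
      = (\<Prod>i=1..n. \<Prod>j=Suc i..n. (1 - x j / x i) * (1 - 1 / (x i * x j)))"
    unfolding Pn_Sigma by (simp add: prod.Sigma case_prod_beta)
  finally have eq: "(\<Prod>a\<in>posroots n. 1 - mnm n (\<lambda>k. - a k) y) =
      (\<Prod>i=1..n. \<Prod>j=Suc i..n. (1 - x j / x i) * (1 - 1 / (x i * x j))) * (\<Prod>i=1..n. 1 - 1 / x i)" .
  have "mnm n (rho2 n) y * (\<Prod>a\<in>posroots n. 1 - mnm n (\<lambda>k. - a k) y)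
      = (\<Prod>i=1..n. y i * (1 - 1 / x i)) *
        (\<Prod>i=1..n. \<Prod>j=Suc i..n. x i * ((1 - x j / x i) * (1 - 1 / (x i * x j))))"
  proof -
    have mr: "mnm n (rho2 n) y = (\<Prod>i=1..n. y i) * (\<Prod>i=1..n. \<Prod>j=Suc i..n. x i)"
      using mnm_rho[OF y] unfolding x_def .
    have r1: "(\<Prod>i=1..n. y i * (1 - 1 / x i)) = (\<Prod>i=1..n. y i) * (\<Prod>i=1..n. 1 - 1 / x i)"
      by (rule prod.distrib)
    have r2: "(\<Prod>i=1..n. \<Prod>j=Suc i..n. x i * ((1 - x j / x i) * (1 - 1 / (x i * x j))))
       = (\<Prod>i=1..n. \<Prod>j=Suc i..n. x i) * (\<Prod>i=1..n. \<Prod>j=Suc i..n. (1 - x j / x i) * (1 - 1 / (x i * x j)))"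
      by (simp only: prod.distrib)
    show ?thesis unfolding eq mr r1 r2 by (simp only: mult_ac)
  qed
  also have "(\<Prod>i=1..n. y i * (1 - 1 / x i)) = (\<Prod>i=1..n. y i - 1 / y i)"
    by (intro prod.cong refl) (use ypos in \<open>auto simp: x_def field_simps power2_eq_square\<close>)
  also have "(\<Prod>i=1..n. \<Prod>j=Suc i..n. x i * ((1 - x j / x i) * (1 - 1 / (x i * x j))))
     = (\<Prod>i=1..n. \<Prod>j=Suc i..n. zz x i - zz x j)"
  proof (intro prod.cong refl)
    fix i j assume "i \<in> {1..n}" "j \<in> {Suc i..n}"
    hence ij: "i \<in> {1..n}" "j \<in> {1..n}" by auto
    have "x i > 0" "x j > 0" unfolding x_def using ypos[OF ij(1)] ypos[OF ij(2)] by auto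
    thus "x i * ((1 - x j / x i) * (1 - 1 / (x i * x j))) = zz x i - zz x j"
      unfolding zz_def by (simp add: field_simps)
  qed
  finally show ?thesis unfolding x_def .
qed

section \<open>Uniqueness of solutions supported in a half space\<close>

lemma phi_vs: "phi n (vs S) = (\<Sum>a\<in>S. phi n a)"
  using phi_sum[of n "\<lambda>_. 1" S] unfolding vs_def by simp

lemma cone_zero:
  assumes T0: "\<forall>mu. Top n f mu = 0" and bnd: "\<forall>mu. f mu \<noteq> 0 \<longrightarrow> phi n mu \<le> cb"
  shows "f mu0 = 0"
proof (rule ccontr)
  assume f0: "f mu0 \<noteq> 0"
  define P where "P mu \<longleftrightarrow> f mu \<noteq> 0 \<and> phi n mu0 \<le> phi n mu" for mu
  define g where "g mu = nat (phi n mu - phi n mu0)" for mu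
  have P0: "P mu0" using f0 by (simp add: P_def)
  have gb: "\<forall>mu. P mu \<longrightarrow> g mu < nat (cb - phi n mu0) + 1"
    using bnd unfolding P_def g_def by (auto simp: nat_le_iff)
  obtain m where m: "P m" "\<forall>mu. P mu \<longrightarrow> g mu \<le> g m"
    using Lattices_Big.ex_has_greatest_nat[of P mu0 g, OF P0 gb] by blast
  have zero: "f (\<lambda>k. m k + vs S k) = 0" if S: "S \<in> Pow (posroots n) - {{}}" for S
  proof (rule ccontr)
    assume nz: "f (\<lambda>k. m k + vs S k) \<noteq> 0"
    have finS: "finite S" using S finite_subset[of S "posroots n"] by auto
    have "(\<Sum>a\<in>S. phi n a) > 0"
      using S finS phi_pos by (intro sum_pos) auto
    hence gt: "phi n (\<lambda>k. m k + vs S k) > phi n m" by (simp add: phi_add phi_vs)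
    hence "P (\<lambda>k. m k + vs S k)" using m(1) nz unfolding P_def by auto
    hence "g (\<lambda>k. m k + vs S k) \<le> g m" using m(2) by blast
    moreover have "g (\<lambda>k. m k + vs S k) > g m" using gt m(1) unfolding g_def P_def by auto
    ultimately show False by simp
  qed
  have "Top n f m = (-1) ^ card {} * f (\<lambda>k. m k + vs {} k) +
      (\<Sum>S\<in>Pow (posroots n) - {{}}. (-1) ^ card S * f (\<lambda>k. m k + vs S k))"
    unfolding Top_def by (subst sum.remove[of _ "{}"]) auto
  also have "(\<Sum>S\<in>Pow (posroots n) - {{}}. (-1) ^ card S * f (\<lambda>k. m k + vs S k)) = 0"
    by (rule sum.neutral) (use zero in auto)
  finally have "Top n f m = f m" by (simp add: vs_def)
  thus False using T0 m(1) unfolding P_def by simp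
qed

lemma posroots_out: "a \<in> posroots n \<Longrightarrow> k \<notin> {1..n} \<Longrightarrow> a k = 0"
  unfolding posroots_eq rmi_def rpl_def eps2_def Pn_def by auto

lemma incr_yT:
  assumes T: "T > 1" and B: "Bb \<ge> 2"
  shows "incr n (\<lambda>i. yT Bb T i ^ 2)"
  unfolding incr_def
proof (intro conjI ballI allI impI)
  fix i assume "i \<in> {1..n}"
  have "yT Bb T i > 1" unfolding yT_def using T B by (simp add: one_less_power)
  thus "yT Bb T i ^ 2 > 1" by (simp add: one_less_power)
next
  fix i j :: nat assume ij: "1 \<le> i" "i < j" "j \<le> n"
  have "Bb ^ i < Bb ^ j" using ij B by (simp add: power_strict_increasing)
  hence "yT Bb T i < yT Bb T j" unfolding yT_def using T by (simp add: power_strict_increasing)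
  moreover have "yT Bb T i > 0" unfolding yT_def using T by simp
  ultimately show "yT Bb T i ^ 2 < yT Bb T j ^ 2" by (simp add: power_strict_mono)
qed

lemma pos_yT: "T > 0 \<Longrightarrow> pos n (yT Bb T)"
  unfolding pos_def yT_def by simp

lemma ev_identity:
  assumes sn: "s \<le> n" and y: "pos n y" and inc: "incr n (\<lambda>i. y i ^ 2)"
  shows "ev n (XK n s \<times> Pow (posroots n)) (\<lambda>p. (-1) ^ card (snd p) * cK s (fst p))
          (\<lambda>p k. wtK n (fst p) k - vs (snd p) k) y
       = ev n (weylB n) wsgn (\<lambda>w k. wact w (LL n (lamB n s)) k - rho2 n k) y"
proof -
  define x where "x = (\<lambda>i. y i ^ 2)"
  define V where "V = (\<Prod>i=1..n. \<Prod>j=Suc i..n. zz x i - zz x j)"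
  define Fs where "Fs = Ecoef n x s - (if 2 \<le> s then Ecoef n x (s - 2) else 0)"
  define R where "R = mnm n (rho2 n) y"
  have ypos: "i \<in> {1..n} \<Longrightarrow> y i > 0" for i using y unfolding pos_def by auto
  have "\<forall>i\<in>{1..n}. y i powi rho2 n i \<noteq> 0"
  proof
    fix i assume "i \<in> {1..n}"
    hence "y i \<noteq> 0" using ypos by force
    thus "y i powi rho2 n i \<noteq> 0" by simp
  qed
  hence R0: "R \<noteq> 0" unfolding R_def mnm_def by simp
  have rp: "(\<Prod>a\<in>posroots n. 1 - mnm n (\<lambda>k. - a k) y) = (\<Prod>i=1..n. y i - 1 / y i) * V / R"
    using rootprod[OF y] R0 unfolding R_def V_def x_def by (simp add: field_simps)
  have pp: "(\<Prod>i=1..n. y i + 1 / y i) * (\<Prod>i=1..n. y i - 1 / y i) = (\<Prod>i=1..n. x i - 1 / x i)"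
  proof -
    have "(\<Prod>i=1..n. y i + 1 / y i) * (\<Prod>i=1..n. y i - 1 / y i) = (\<Prod>i=1..n. (y i + 1 / y i) * (y i - 1 / y i))"
      by (rule prod.distrib[symmetric])
    also have "\<dots> = (\<Prod>i=1..n. x i - 1 / x i)"
      by (intro prod.cong refl) (use ypos in \<open>auto simp: x_def field_simps power2_eq_square\<close>)
    finally show ?thesis .
  qed
  have "ev n (XK n s \<times> Pow (posroots n)) (\<lambda>p. (-1) ^ card (snd p) * cK s (fst p))
          (\<lambda>p k. wtK n (fst p) k - vs (snd p) k) y
      = ev n (XK n s) (cK s) (wtK n) y * (\<Prod>a\<in>posroots n. 1 - mnm n (\<lambda>k. - a k) y)"
    by (rule ev_Top[OF finite_XK pos_nzy[OF y]])
  also have "\<dots> = (\<Prod>i=1..n. y i + 1 / y i) * Fs * ((\<Prod>i=1..n. y i - 1 / y i) * V / R)"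
    unfolding evK[OF y] rp Fs_def x_def ..
  also have "\<dots> = ((\<Prod>i=1..n. y i + 1 / y i) * (\<Prod>i=1..n. y i - 1 / y i)) * V * Fs / R"
    by (simp add: field_simps)
  also have "\<dots> = Dn n x * Fs / R"
    unfolding pp Dn_formula[OF inc[folded x_def]] V_def ..
  also have "\<dots> = Cd n x s / R"
    unfolding Fs_def Cd_extract[OF inc[folded x_def] sn] ..
  also have "\<dots> = ev n (weylB n) wsgn (\<lambda>w k. wact w (LL n (lamB n s)) k - rho2 n k) y"
    unfolding evN[OF sn y] R_def x_def ..
  finally show ?thesis .
qed

lemma Top_diff: "Top n (\<lambda>mu. f mu - g mu) mu = Top n f mu - Top n g mu"
  unfolding Top_def by (simp add: sum_subtractf right_diff_distrib)

lemma wmult_bound: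
  assumes "wmult n lam mu \<noteq> 0"
  shows "phi n mu \<le> (\<Sum>w\<in>weylB n. \<bar>phi n (wact w (LL n lam))\<bar>) + \<bar>phi n (rho2 n)\<bar>"
proof -
  obtain w where w: "w \<in> weylB n"
    and k: "kostant n (\<lambda>k. wact w (\<lambda>i. lam i + rho2 n i) k - (mu k + rho2 n k)) \<noteq> 0"
  proof (rule ccontr)
    assume "\<not> thesis"
    hence "\<forall>w\<in>weylB n. kostant n (\<lambda>k. wact w (\<lambda>i. lam i + rho2 n i) k - (mu k + rho2 n k)) = 0"
      using that by blast
    hence "wmult n lam mu = 0" unfolding wmult_def by (intro sum.neutral) auto
    thus False using assms by simp
  qed
  define nu where "nu = (\<lambda>k. wact w (LL n lam) k - (mu k + rho2 n k))"
  have "kset (posroots n) nu \<noteq> {}"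
    using k unfolding kostant_kp kp_def nu_def LL_def by (metis card.empty)
  then obtain c where c: "(\<lambda>k. \<Sum>a\<in>posroots n. int (c a) * a k) = nu"
    unfolding kset_def by auto
  have "phi n nu = (\<Sum>a\<in>posroots n. int (c a) * phi n a)"
    unfolding c[symmetric] by (rule phi_sum)
  also have "\<dots> \<ge> 0" using phi_pos by (intro sum_nonneg) (simp add: less_imp_le)
  finally have "phi n nu \<ge> 0" .
  hence "phi n mu \<le> phi n (wact w (LL n lam)) - phi n (rho2 n)"
    unfolding nu_def phi_diff phi_add by simp
  also have "\<dots> \<le> \<bar>phi n (wact w (LL n lam))\<bar> + \<bar>phi n (rho2 n)\<bar>" by simp
  also have "\<bar>phi n (wact w (LL n lam))\<bar> \<le> (\<Sum>w\<in>weylB n. \<bar>phi n (wact w (LL n lam))\<bar>)"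
    using w by (intro member_le_sum) auto
  finally show ?thesis by simp
qed

lemma coefs_bound:
  assumes "finite X" "coefs X c wt mu \<noteq> 0"
  shows "phi n mu \<le> (\<Sum>x\<in>X. \<bar>phi n (wt x)\<bar>)"
proof -
  have "{x\<in>X. wt x = mu} \<noteq> {}"
  proof
    assume e: "{x\<in>X. wt x = mu} = {}"
    have "coefs X c wt mu = 0" unfolding coefs_def e by simp
    thus False using assms(2) by simp
  qed
  then obtain x where x: "x \<in> X" "wt x = mu" by auto
  have "phi n mu \<le> \<bar>phi n (wt x)\<bar>" using x by simp
  also have "\<dots> \<le> (\<Sum>x\<in>X. \<bar>phi n (wt x)\<bar>)" using x assms(1) by (intro member_le_sum) auto
  finally show ?thesis .
qed

lemma sum_abs_bound:
  fixes wt :: "'x \<Rightarrow> nat \<Rightarrow> int"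
  assumes "finite X" "x \<in> X" "k \<in> {1..n}"
  shows "\<bar>wt x k\<bar> \<le> (\<Sum>x\<in>X. \<Sum>k=1..n. \<bar>wt x k\<bar> :: int)"
proof -
  have "\<bar>wt x k\<bar> \<le> (\<Sum>k=1..n. \<bar>wt x k\<bar>)"
    by (rule member_le_sum[of k "{1..n}" "\<lambda>k. \<bar>wt x k\<bar>"]) (use assms(3) in auto)
  also have "\<dots> \<le> (\<Sum>x\<in>X. \<Sum>k=1..n. \<bar>wt x k\<bar>)"
    using assms(1,2) by (intro member_le_sum) (auto intro: sum_nonneg)
  finally show ?thesis .
qed

theorem wmult_K:
  assumes sn: "s \<le> n"
  shows "wmult n (lamB n s) = coefs (XK n s) (cK s) (wtK n)"
proof -
  define X' where "X' = XK n s \<times> Pow (posroots n)"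
  define c' where "c' = (\<lambda>p::(nat set \<times> (nat \<times> bool) set) \<times> (nat \<Rightarrow> int) set. (-1) ^ card (snd p) * cK s (fst p))"
  define wt' where "wt' = (\<lambda>p k. wtK n (fst p) k - vs (snd p) k)"
  define wtN where "wtN = (\<lambda>w k. wact w (LL n (lamB n s)) k - rho2 n k)"
  have fX': "finite X'" unfolding X'_def by simp
  define C where "C = (\<Sum>x\<in>X'. \<Sum>k=1..n. \<bar>wt' x k\<bar>) + (\<Sum>w\<in>weylB n. \<Sum>k=1..n. \<bar>wtN w k\<bar>)"
  have C1: "(\<Sum>x\<in>X'. \<Sum>k=1..n. \<bar>wt' x k\<bar>) \<ge> 0" "(\<Sum>w\<in>weylB n. \<Sum>k=1..n. \<bar>wtN w k\<bar>) \<ge> 0"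
    by (auto intro!: sum_nonneg)
  have bX: "\<forall>x\<in>X'. wt' x \<in> box n C"
  proof
    fix p assume p: "p \<in> X'"
    have out: "wt' p k = 0" if k: "k \<notin> {1..n}" for k
    proof -
      have "vs (snd p) k = 0" unfolding vs_def
        using p posroots_out[OF _ k] unfolding X'_def by (intro sum.neutral) auto
      thus ?thesis unfolding wt'_def wtK_def using k by simp
    qed
    have "\<bar>wt' p k\<bar> \<le> C" for k
    proof (cases "k \<in> {1..n}")
      case True thus ?thesis using sum_abs_bound[OF fX' p True, of wt'] C1 unfolding C_def by linarith
    next
      case False thus ?thesis using out C1 unfolding C_def by simp
    qed
    thus "wt' p \<in> box n C" unfolding box_def using out by auto
  qed
  have bW: "\<forall>w\<in>weylB n. wtN w \<in> box n C"
  proof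
    fix w assume w: "w \<in> weylB n"
    have out: "wtN w k = 0" if k: "k \<notin> {1..n}" for k
    proof -
      have "fst w permutes {1..n}" using w unfolding weylB_def by auto
      hence "fst w k = k" using permutes_not_in k by fast
      thus ?thesis unfolding wtN_def wact_def using LL_out[OF k] k by (simp add: rho2_def)
    qed
    have "\<bar>wtN w k\<bar> \<le> C" for k
    proof (cases "k \<in> {1..n}")
      case True thus ?thesis using sum_abs_bound[OF finite_weylB w True, of wtN] C1 unfolding C_def by linarith
    next
      case False thus ?thesis using out C1 unfolding C_def by simp
    qed
    thus "wtN w \<in> box n C" unfolding box_def using out by auto
  qed
  define Bb where "Bb = nat (2 * C) + 2"
  have B1: "2 * C < int Bb" unfolding Bb_def by linarith
  have B2: "Bb \<ge> 2" unfolding Bb_def by simp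
  have evq: "\<forall>T>1. ev n X' c' wt' (yT Bb T) = ev n (weylB n) wsgn wtN (yT Bb T)"
  proof (intro allI impI)
    fix T :: real assume T: "T > 1"
    show "ev n X' c' wt' (yT Bb T) = ev n (weylB n) wsgn wtN (yT Bb T)"
      unfolding X'_def c'_def wt'_def wtN_def
      by (rule ev_identity[OF sn pos_yT incr_yT[OF T B2]]) (use T in simp)
  qed
  have ceq: "coefs X' c' wt' = coefs (weylB n) wsgn wtN"
    by (rule coefs_unique[OF fX' finite_weylB bX bW B1 evq])
  have T0: "\<forall>mu. Top n (\<lambda>mu. wmult n (lamB n s) mu - coefs (XK n s) (cK s) (wtK n) mu) mu = 0"
  proof
    fix mu
    have "Top n (coefs (XK n s) (cK s) (wtK n)) mu = coefs X' c' wt' mu"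
      unfolding X'_def c'_def wt'_def by (rule Top_coefs) simp
    also have "\<dots> = Top n (wmult n (lamB n s)) mu"
      unfolding ceq Top_wmult_coefs wtN_def ..
    finally show "Top n (\<lambda>mu. wmult n (lamB n s) mu - coefs (XK n s) (cK s) (wtK n) mu) mu = 0"
      unfolding Top_diff by simp
  qed
  define cb where "cb = ((\<Sum>w\<in>weylB n. \<bar>phi n (wact w (LL n (lamB n s)))\<bar>) + \<bar>phi n (rho2 n)\<bar>)
      + (\<Sum>x\<in>XK n s. \<bar>phi n (wtK n x)\<bar>)"
  have bnd: "\<forall>mu. wmult n (lamB n s) mu - coefs (XK n s) (cK s) (wtK n) mu \<noteq> 0 \<longrightarrow> phi n mu \<le> cb"
  proof (intro allI impI)
    fix mu assume "wmult n (lamB n s) mu - coefs (XK n s) (cK s) (wtK n) mu \<noteq> 0"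
    hence "wmult n (lamB n s) mu \<noteq> 0 \<or> coefs (XK n s) (cK s) (wtK n) mu \<noteq> 0" by auto
    moreover have "(\<Sum>w\<in>weylB n. \<bar>phi n (wact w (LL n (lamB n s)))\<bar>) + \<bar>phi n (rho2 n)\<bar> \<ge> 0"
      by (auto intro!: sum_nonneg add_nonneg_nonneg)
    moreover have "(\<Sum>x\<in>XK n s. \<bar>phi n (wtK n x)\<bar>) \<ge> 0" by (auto intro!: sum_nonneg)
    moreover have "coefs (XK n s) (cK s) (wtK n) mu \<noteq> 0 \<Longrightarrow> phi n mu \<le> (\<Sum>x\<in>XK n s. \<bar>phi n (wtK n x)\<bar>)"
      by (rule coefs_bound[OF finite_XK])
    ultimately show "phi n mu \<le> cb" unfolding cb_def
      using wmult_bound[of n "lamB n s" mu] by linarith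
  qed
  show ?thesis
  proof
    fix mu
    have "wmult n (lamB n s) mu - coefs (XK n s) (cK s) (wtK n) mu = 0"
      by (rule cone_zero[OF T0 bnd])
    thus "wmult n (lamB n s) mu = coefs (XK n s) (cK s) (wtK n) mu" by simp
  qed
qed

lemma qint_Suc: "qint (Suc m) q = qint m q + q ^ m"
  unfolding qint_def by simp

lemma qint_0 [simp]: "qint 0 q = 0"
  unfolding qint_def by simp

lemma qfact_0 [simp]: "qfact 0 q = 1"
  unfolding qfact_def by simp

lemma qint_add: "qint (a + b) q = qint a q + q ^ a * qint b q"
  by (induction b) (simp_all add: qint_Suc algebra_simps power_add)

lemma qint_pos: "q > 0 \<Longrightarrow> m \<ge> 1 \<Longrightarrow> qint m q > 0"
  unfolding qint_def by (intro sum_pos) (auto simp: lessThan_empty_iff)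

lemma qfact_Suc: "qfact (Suc j) q = qfact j q * qint (Suc j) q"
  unfolding qfact_def by (simp add: prod.cl_ivl_Suc)

lemma qfact_pos: "q > 0 \<Longrightarrow> qfact j q > 0"
  unfolding qfact_def by (intro prod_pos) (auto intro: qint_pos)

fun qbp :: "nat \<Rightarrow> nat \<Rightarrow> real poly" where
  "qbp 0 j = (if j = 0 then 1 else 0)"
| "qbp (Suc N) j = (if j = 0 then 1 else qbp N j + monom 1 (Suc N - j) * qbp N (j - 1))"

lemma qbp_0 [simp]: "qbp N 0 = 1"
  by (cases N) auto

lemma qbp_zero: "j > N \<Longrightarrow> qbp N j = 0"
  by (induction N arbitrary: j) auto

lemma qbp_coeff0: "j \<le> N \<Longrightarrow> coeff (qbp N j) 0 = 1"
proof (induction N arbitrary: j)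
  case 0 thus ?case by simp
next
  case (Suc N j)
  show ?case
  proof (cases "j = 0")
    case True thus ?thesis by simp
  next
    case False
    show ?thesis
    proof (cases "j = Suc N")
      case True
      thus ?thesis using Suc.IH[of N] by (simp add: qbp_zero)
    next
      case False
      hence "j \<le> N" using Suc.prems by simp
      thus ?thesis using Suc.IH[of j] \<open>j \<noteq> 0\<close> by (simp add: coeff_monom_mult)
    qed
  qed
qed

lemma qbp_val:
  assumes q: "q > 0" and j: "j \<le> N"
  shows "poly (qbp N j) q = qfact N q / (qfact j q * qfact (N - j) q)"
  using j
proof (induction N arbitrary: j)
  case 0 thus ?case by simp
next
  case (Suc N j)
  have qf: "qfact m q > 0" for m using qfact_pos[OF q] .
  show ?case
  proof (cases "j = 0")
    case True thus ?thesis using qf[of "Suc N"] by simp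
  next
    case j0: False
    then obtain j' where j': "j = Suc j'" by (cases j) auto
    show ?thesis
    proof (cases "j = Suc N")
      case True
      have "poly (qbp (Suc N) j) q = poly (qbp N N) q"
        using True by (simp add: qbp_zero)
      also have "\<dots> = 1" using Suc.IH[of N] qf[of N] by simp
      also have "\<dots> = qfact (Suc N) q / (qfact j q * qfact (Suc N - j) q)"
        using True qf[of "Suc N"] by simp
      finally show ?thesis .
    next
      case False
      hence jN: "j \<le> N" using Suc.prems by simp
      have "poly (qbp (Suc N) j) q = poly (qbp N j) q + q ^ (Suc N - j) * poly (qbp N j') q"
        using j0 j' by (simp add: poly_monom)
      also have "\<dots> = qfact N q / (qfact j q * qfact (N - j) q)
                 + q ^ (Suc N - j) * (qfact N q / (qfact j' q * qfact (N - j') q))"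
        using Suc.IH[OF jN] Suc.IH[of j'] jN j' by simp
      also have "\<dots> = qfact N q / (qfact j q * qfact (Suc N - j) q) *
                     (qint (Suc N - j) q + q ^ (Suc N - j) * qint j q)"
      proof -
        have a: "qfact (Suc N - j) q = qfact (N - j) q * qint (Suc N - j) q"
          using jN qfact_Suc[of "N - j" q] by (simp add: Suc_diff_le)
        have b: "N - j' = Suc N - j" using j' by simp
        have c: "qfact j q = qfact j' q * qint j q" using j' qfact_Suc by simp
        have p1: "qint (Suc N - j) q > 0" "qint j q > 0" using qint_pos[OF q] jN j' by auto
        show ?thesis unfolding a b c using qf[of j'] qf[of "N - j"] qf[of N] p1 by (simp add: field_simps)
      qed
      also have "qint (Suc N - j) q + q ^ (Suc N - j) * qint j q = qint (Suc N) q"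
        using qint_add[of "Suc N - j" j q] jN by (simp add: add.commute)
      also have "qfact N q / (qfact j q * qfact (Suc N - j) q) * qint (Suc N) q
               = qfact (Suc N) q / (qfact j q * qfact (Suc N - j) q)"
        by (simp add: qfact_Suc)
      finally show ?thesis .
    qed
  qed
qed

section \<open>Gauss' q-binomial theorem\<close>

lemma coeff_mult_lin: fixes p :: "real poly" shows "coeff (p * [:1, b:]) j = coeff p j + (if j = 0 then 0 else b * coeff p (j - 1))"
proof -
  have "p * [:1, b:] = p + pCons 0 (smult b p)"
    by (simp add: mult.commute[of p] mult_pCons_left smult_1_left)
  thus ?thesis by (cases j) (simp_all add: coeff_pCons)
qed

lemma tri_eq: "Suc j * j div 2 = j * (j - 1) div 2 + j"
proof -
  have "Suc j * j = j * (j - 1) + 2 * j" by (cases j) (simp_all add: algebra_simps)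
  thus ?thesis by simp
qed

lemma gauss_coeff:
  fixes a q :: real
  shows "coeff (\<Prod>k<N. [:1, a * q ^ k:]) j = a ^ j * q ^ (j * (j - 1) div 2) * poly (qbp N j) q"
proof (induction N arbitrary: j)
  case 0 thus ?case by (simp add: coeff_1)
next
  case (Suc N j)
  have "coeff (\<Prod>k<Suc N. [:1, a * q ^ k:]) j = coeff ((\<Prod>k<N. [:1, a * q ^ k:]) * [:1, a * q ^ N:]) j"
    by simp
  also have "\<dots> = coeff (\<Prod>k<N. [:1, a * q ^ k:]) j +
       (if j = 0 then 0 else a * q ^ N * coeff (\<Prod>k<N. [:1, a * q ^ k:]) (j - 1))"
    by (rule coeff_mult_lin)
  also have "\<dots> = a ^ j * q ^ (j * (j - 1) div 2) * poly (qbp (Suc N) j) q"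
  proof (cases j)
    case 0 thus ?thesis using Suc.IH[of 0] by simp
  next
    case (Suc j')
    have rec: "poly (qbp (Suc N) j) q = poly (qbp N j) q + q ^ (N - j') * poly (qbp N j') q"
      using Suc by (simp add: poly_monom)
    show ?thesis
    proof (cases "j' \<le> N")
      case True
      have ex: "q ^ N * q ^ (j' * (j' - 1) div 2) = q ^ (j * (j - 1) div 2) * q ^ (N - j')"
      proof -
        have "N + j' * (j' - 1) div 2 = j * (j - 1) div 2 + (N - j')"
          using True tri_eq[of j'] Suc by simp
        thus ?thesis by (simp add: power_add[symmetric])
      qed
      show ?thesis unfolding rec using Suc.IH[of j] Suc.IH[of j'] Suc ex
        by (simp add: algebra_simps)
    next
      case False
      hence "qbp N j' = 0" "qbp N j = 0" using Suc by (auto intro: qbp_zero)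
      thus ?thesis unfolding rec using Suc.IH[of j] Suc.IH[of j'] Suc by simp
    qed
  qed
  finally show ?case .
qed

section \<open>Specialisation x_i = q^i\<close>

lemma sym_prod:
  fixes q :: real
  assumes q: "q > 0"
  shows "[:1, 1:] * (\<Prod>b\<in>Jn n. [:1, valx (\<lambda>i. q ^ i) b:]) = (\<Prod>k<2 * n + 1. [:1, (1 / q ^ n) * q ^ k:])"
proof -
  define f where "f k = [:1, (1 / q ^ n) * q ^ k:]" for k
  have G: "(\<Prod>b\<in>Jn n. [:1, valx (\<lambda>i. q ^ i) b:]) = (\<Prod>i=1..n. [:1, q ^ i:] * [:1, 1 / q ^ i:])"
    unfolding Jn_def prod.cartesian_product' by (intro prod.cong refl) (simp add: UNIV_bool valx_def)
  have U: "{..<2 * n + 1} = ({..<n} \<union> {n}) \<union> {Suc n..2 * n}" by auto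
  have "(\<Prod>k<2 * n + 1. f k) = (\<Prod>k\<in>{..<n} \<union> {n}. f k) * (\<Prod>k\<in>{Suc n..2 * n}. f k)"
    unfolding U by (rule prod.union_disjoint) auto
  also have "(\<Prod>k\<in>{..<n} \<union> {n}. f k) = (\<Prod>k\<in>{..<n}. f k) * f n"
    by (subst prod.union_disjoint) auto
  also have "(\<Prod>k\<in>{..<n}. f k) = (\<Prod>i=1..n. f (n - i))"
  proof -
    have "{..<n} = (\<lambda>i. n - i) ` {1..n}"
    proof
      show "{..<n} \<subseteq> (\<lambda>i. n - i) ` {1..n}"
      proof
        fix k assume "k \<in> {..<n}"
        hence "k = n - (n - k)" "n - k \<in> {1..n}" by auto
        thus "k \<in> (\<lambda>i. n - i) ` {1..n}" by blast
      qed
    qed auto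
    moreover have "inj_on (\<lambda>i. n - i) {1..n}" by (auto simp: inj_on_def)
    ultimately show ?thesis by (simp add: prod.reindex)
  qed
  also have "(\<Prod>k\<in>{Suc n..2 * n}. f k) = (\<Prod>i=1..n. f (n + i))"
  proof -
    have "{Suc n..2 * n} = (\<lambda>i. n + i) ` {1..n}"
    proof
      show "{Suc n..2 * n} \<subseteq> (\<lambda>i. n + i) ` {1..n}"
      proof
        fix k assume "k \<in> {Suc n..2 * n}"
        hence "k = n + (k - n)" "k - n \<in> {1..n}" by auto
        thus "k \<in> (\<lambda>i. n + i) ` {1..n}" by blast
      qed
    qed auto
    moreover have "inj_on (\<lambda>i. n + i) {1..n}" by (auto simp: inj_on_def)
    ultimately show ?thesis using prod.reindex[of "\<lambda>i. n + i" "{1..n}" f] by (simp add: comp_def mult_2)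
  qed
  also have "f n = [:1, 1:]" unfolding f_def using q by simp
  also have "(\<Prod>i=1..n. f (n - i)) = (\<Prod>i=1..n. [:1, 1 / q ^ i:])"
  proof (intro prod.cong refl)
    fix i assume "i \<in> {1..n}"
    hence "q ^ n = q ^ (n - i) * q ^ i" by (simp add: power_add[symmetric])
    thus "f (n - i) = [:1, 1 / q ^ i:]" unfolding f_def using q by (simp add: field_simps)
  qed
  also have "(\<Prod>i=1..n. f (n + i)) = (\<Prod>i=1..n. [:1, q ^ i:])"
    unfolding f_def using q by (intro prod.cong refl) (simp add: power_add)
  finally have ch: "(\<Prod>k<2 * n + 1. f k) = (\<Prod>i=1..n. [:1, 1 / q ^ i:]) * [:1, 1:] * (\<Prod>i=1..n. [:1, q ^ i:])" .
  show ?thesis unfolding f_def[symmetric] G prod.distrib ch by (simp only: mult_ac)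
qed

definition cq :: "nat \<Rightarrow> real \<Rightarrow> nat \<Rightarrow> real" where
  "cq n q j = (1 / q ^ n) ^ j * q ^ (j * (j - 1) div 2) * poly (qbp (2 * n + 1) j) q"

lemma Ecoef_cq:
  assumes q: "q > 0"
  shows "Ecoef n (\<lambda>i. q ^ i) j + (if j = 0 then 0 else Ecoef n (\<lambda>i. q ^ i) (j - 1)) = cq n q j"
proof -
  have "Ecoef n (\<lambda>i. q ^ i) j + (if j = 0 then 0 else Ecoef n (\<lambda>i. q ^ i) (j - 1))
      = coeff ((\<Prod>b\<in>Jn n. [:1, valx (\<lambda>i. q ^ i) b:]) * [:1, 1:]) j"
    unfolding Ecoef_def coeff_mult_lin by simp
  also have "\<dots> = coeff (\<Prod>k<2 * n + 1. [:1, (1 / q ^ n) * q ^ k:]) j"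
    using sym_prod[OF q, of n] by (simp add: mult.commute)
  also have "\<dots> = cq n q j" unfolding cq_def by (rule gauss_coeff)
  finally show ?thesis .
qed

lemma Fs_cq:
  assumes q: "q > 0"
  shows "Ecoef n (\<lambda>i. q ^ i) s - (if 2 \<le> s then Ecoef n (\<lambda>i. q ^ i) (s - 2) else 0)
       = cq n q s - (if 1 \<le> s then cq n q (s - 1) else 0)"
proof -
  note E = Ecoef_cq[OF q, of n]
  consider "s = 0" | "s = 1" | "s \<ge> 2" by linarith
  thus ?thesis
  proof cases
    case 1 thus ?thesis using E[of 0] by simp
  next
    case 2 thus ?thesis using E[of 0] E[of 1] by simp
  next
    case 3
    hence "s - 1 - 1 = s - 2" "s - 1 \<noteq> 0" by auto
    thus ?thesis using E[of s] E[of "s - 1"] 3 by simp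
  qed
qed

definition ang :: "nat \<Rightarrow> (nat \<Rightarrow> int) \<Rightarrow> int" where
  "ang n v = (\<Sum>i=1..n. int i * v i)"

lemma wtK_wvec: "wtK n p \<in> wvec n"
  unfolding wvec_def wtK_def by auto

lemma psc_eq:
  assumes sn: "s \<le> n"
  shows "psc n (lamB n s) e = (\<Sum>x\<in>{x\<in>XK n s. ang n (wtK n x) = e}. cK s x)"
proof -
  define M where "M = coefs (XK n s) (cK s) (wtK n)"
  have wm: "wmult n (lamB n s) = M" unfolding M_def by (rule wmult_K[OF sn])
  define A where "A = {x\<in>XK n s. ang n (wtK n x) = e}"
  have fA: "finite A" unfolding A_def by simp
  have "psc n (lamB n s) e = (\<Sum>mu\<in>{mu\<in>wvec n. M mu \<noteq> 0 \<and> ang n mu = e}. M mu)"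
    unfolding psc_def wm ang_def ..
  also have "\<dots> = (\<Sum>mu\<in>wtK n ` A. M mu)"
  proof (rule sum.mono_neutral_left)
    show "finite (wtK n ` A)" using fA by simp
    show "{mu\<in>wvec n. M mu \<noteq> 0 \<and> ang n mu = e} \<subseteq> wtK n ` A"
    proof
      fix mu assume mu: "mu \<in> {mu\<in>wvec n. M mu \<noteq> 0 \<and> ang n mu = e}"
      have "{x\<in>XK n s. wtK n x = mu} \<noteq> {}"
      proof
        assume em: "{x\<in>XK n s. wtK n x = mu} = {}"
        have "M mu = 0" unfolding M_def coefs_def em by simp
        thus False using mu by simp
      qed
      then obtain x where "x \<in> XK n s" "wtK n x = mu" by auto
      thus "mu \<in> wtK n ` A" using mu unfolding A_def by auto
    qed
    show "\<forall>i\<in>wtK n ` A - {mu\<in>wvec n. M mu \<noteq> 0 \<and> ang n mu = e}. M i = 0"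
      unfolding A_def using wtK_wvec by auto
  qed
  also have "\<dots> = (\<Sum>mu\<in>wtK n ` A. \<Sum>x\<in>{x\<in>A. wtK n x = mu}. cK s x)"
  proof (intro sum.cong refl)
    fix mu assume "mu \<in> wtK n ` A"
    hence "{x\<in>XK n s. wtK n x = mu} = {x\<in>A. wtK n x = mu}" unfolding A_def by auto
    thus "M mu = (\<Sum>x\<in>{x\<in>A. wtK n x = mu}. cK s x)" unfolding M_def coefs_def by simp
  qed
  also have "\<dots> = (\<Sum>x\<in>A. cK s x)" by (rule sum.image_gen[OF fA, symmetric])
  finally show ?thesis unfolding A_def .
qed

lemma psc_support:
  assumes sn: "s \<le> n" and "psc n (lamB n s) e \<noteq> 0"
  shows "e \<in> ang n ` wtK n ` XK n s"
proof -
  have "{x\<in>XK n s. ang n (wtK n x) = e} \<noteq> {}"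
    using assms psc_eq[OF sn] by fastforce
  thus ?thesis by blast
qed

lemma mnm_powers: "t > 0 \<Longrightarrow> mnm n v (\<lambda>i. t ^ i) = t powi ang n v"
proof -
  assume t: "t > 0"
  have "mnm n v (\<lambda>i. t ^ i) = (\<Prod>i=1..n. t powi (int i * v i))"
    unfolding mnm_def
  proof (intro prod.cong refl)
    fix i
    have "(t ^ i) powi v i = (t powi int i) powi v i" by (simp only: power_int_of_nat)
    also have "\<dots> = t powi (int i * v i)" by (rule power_int_mult[symmetric])
    finally show "(t ^ i) powi v i = t powi (int i * v i)" .
  qed
  also have "\<dots> = t powi ang n v" unfolding ang_def using t by (simp add: prod_powi)
  finally show ?thesis .
qed

lemma laurent_psc:
  assumes sn: "s \<le> n" and t: "t > 0"
  shows "(\<Sum>e\<in>ang n ` wtK n ` XK n s. of_int (psc n (lamB n s) e) * t powi e)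
       = (\<Prod>i=1..n. t ^ i + 1 / t ^ i) *
         (cq n (t ^ 2) s - (if 1 \<le> s then cq n (t ^ 2) (s - 1) else 0))"
proof -
  have "(\<Sum>e\<in>ang n ` wtK n ` XK n s. of_int (psc n (lamB n s) e) * t powi e)
      = (\<Sum>e\<in>(\<lambda>x. ang n (wtK n x)) ` XK n s. \<Sum>x\<in>{x\<in>XK n s. ang n (wtK n x) = e}. of_int (cK s x) * t powi ang n (wtK n x))"
    unfolding psc_eq[OF sn] by (simp add: image_image sum_distrib_right)
  also have "\<dots> = (\<Sum>x\<in>XK n s. of_int (cK s x) * t powi ang n (wtK n x))"
    by (rule sum.image_gen[symmetric]) simp
  also have "\<dots> = ev n (XK n s) (cK s) (wtK n) (\<lambda>i. t ^ i)"
    unfolding ev_def using mnm_powers[OF t] by simp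
  also have "\<dots> = (\<Prod>i=1..n. t ^ i + 1 / t ^ i) *
      (Ecoef n (\<lambda>i. (t ^ i) ^ 2) s - (if 2 \<le> s then Ecoef n (\<lambda>i. (t ^ i) ^ 2) (s - 2) else 0))"
    by (rule evK) (use t in \<open>simp add: pos_def\<close>)
  also have "(\<lambda>i. (t ^ i) ^ 2) = (\<lambda>i. (t ^ 2) ^ i)" by (simp add: power_mult[symmetric] mult.commute)
  also have "Ecoef n (\<lambda>i. (t ^ 2) ^ i) s - (if 2 \<le> s then Ecoef n (\<lambda>i. (t ^ 2) ^ i) (s - 2) else 0)
      = cq n (t ^ 2) s - (if 1 \<le> s then cq n (t ^ 2) (s - 1) else 0)"
    by (rule Fs_cq) (use t in simp)
  finally show ?thesis .
qed

definition Rp :: "nat \<Rightarrow> nat \<Rightarrow> real poly" where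
  "Rp n s = (\<Prod>i=1..n. monom 1 i + 1) *
     (qbp (2 * n + 1) s - (if 1 \<le> s then monom 1 (n + 1 - s) * qbp (2 * n + 1) (s - 1) else 0))"

definition eta0 :: "nat \<Rightarrow> nat \<Rightarrow> int" where
  "eta0 n s = - (\<Sum>i=1..n. int i) - 2 * int (s * n) + 2 * int (s * (s - 1) div 2)"

lemma powi_sq: "(t::real) \<noteq> 0 \<Longrightarrow> (t ^ 2) ^ k = t powi (2 * int k)"
  by (simp add: power_int_mult power_mult[symmetric])

lemma closed_form:
  fixes t :: real
  assumes sn: "s \<le> n" and t: "t > 0"
  shows "(\<Prod>i=1..n. t ^ i + 1 / t ^ i) * (cq n (t ^ 2) s - (if 1 \<le> s then cq n (t ^ 2) (s - 1) else 0))
       = t powi eta0 n s * poly (Rp n s) (t ^ 2)"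
proof -
  define q where "q = t ^ 2"
  have t0: "t \<noteq> 0" using t by simp
  have q0: "q \<noteq> 0" unfolding q_def using t by simp
  define QB where "QB j = poly (qbp (2 * n + 1) j) q" for j
  define Ts where "Ts = s * (s - 1) div 2"
  have P: "(\<Prod>i=1..n. t ^ i + 1 / t ^ i) = t powi (- (\<Sum>i=1..n. int i)) * (\<Prod>i=1..n. q ^ i + 1)"
  proof -
    have "(\<Prod>i=1..n. t ^ i + 1 / t ^ i) = (\<Prod>i=1..n. t powi (- int i) * (q ^ i + 1))"
    proof (intro prod.cong refl)
      fix i
      have "t powi (- int i) * (q ^ i + 1) = t powi (- int i) * t powi (2 * int i) + t powi (- int i)"
        unfolding q_def powi_sq[OF t0] by (simp add: algebra_simps)
      also have "\<dots> = t ^ i + 1 / t ^ i"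
      proof -
        have sq: "t powi (2 * int i) = t ^ i * t ^ i"
          using powi_sq[OF t0, of i] by (simp add: power2_eq_square power_mult_distrib)
        have mi: "t powi (- int i) = 1 / t ^ i" by (simp add: power_int_minus divide_inverse)
        show ?thesis unfolding sq mi using t0 by (simp add: field_simps)
      qed
      finally show "t ^ i + 1 / t ^ i = t powi (- int i) * (q ^ i + 1)" by simp
    qed
    also have "\<dots> = (\<Prod>i=1..n. t powi (- int i)) * (\<Prod>i=1..n. q ^ i + 1)" by (rule prod.distrib)
    also have "(\<Prod>i=1..n. t powi (- int i)) = t powi (- (\<Sum>i=1..n. int i))"
      using prod_powi[OF t0, of "\<lambda>i. - int i" "{1..n}"] by (simp add: sum_negf)
    finally show ?thesis .
  qed
  have cqv: "cq n q j = t powi (2 * int (j * (j - 1) div 2) - 2 * int (n * j)) * QB j" for j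
  proof -
    have a: "(1 / q ^ n) ^ j = 1 / t ^ (2 * (n * j))"
      unfolding q_def by (simp add: power_one_over power_mult[symmetric] mult.assoc)
    have b: "t powi (- (2 * int (n * j))) = t powi (- int (2 * (n * j)))" by simp
    also have "\<dots> = inverse (t ^ (2 * (n * j)))" by (simp only: power_int_minus power_int_of_nat)
    finally have "(1 / q ^ n) ^ j = t powi (- (2 * int (n * j)))" unfolding a by (simp add: divide_inverse)
    moreover have "q ^ (j * (j - 1) div 2) = t powi (2 * int (j * (j - 1) div 2))"
      unfolding q_def by (rule powi_sq[OF t0])
    ultimately show ?thesis unfolding cq_def QB_def using t0
      by (simp add: power_int_add[symmetric] algebra_simps)
  qed
  have F: "cq n q s - (if 1 \<le> s then cq n q (s - 1) else 0)
      = t powi (2 * int Ts - 2 * int (n * s)) *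
        (QB s - (if 1 \<le> s then q ^ (n + 1 - s) * QB (s - 1) else 0))"
  proof (cases "1 \<le> s")
    case False thus ?thesis using cqv[of s] unfolding Ts_def by simp
  next
    case True
    have tri: "Ts = (s - 1) * (s - 1 - 1) div 2 + (s - 1)"
      unfolding Ts_def using tri_eq[of "s - 1"] True by simp
    have "2 * int ((s - 1) * (s - 1 - 1) div 2) - 2 * int (n * (s - 1))
        = (2 * int Ts - 2 * int (n * s)) + 2 * int (n + 1 - s)"
      using tri True sn by (simp add: of_nat_diff algebra_simps)
    hence "cq n q (s - 1) = t powi ((2 * int Ts - 2 * int (n * s)) + 2 * int (n + 1 - s)) * QB (s - 1)"
      unfolding cqv[of "s - 1"] by simp
    also have "\<dots> = t powi (2 * int Ts - 2 * int (n * s)) * (q ^ (n + 1 - s) * QB (s - 1))"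
      unfolding q_def powi_sq[OF t0] using t0 by (simp add: power_int_add)
    finally have "cq n q (s - 1) = t powi (2 * int Ts - 2 * int (n * s)) * (q ^ (n + 1 - s) * QB (s - 1))" .
    thus ?thesis using cqv[of s] True unfolding Ts_def by (simp add: algebra_simps)
  qed
  have R: "poly (Rp n s) q = (\<Prod>i=1..n. q ^ i + 1) * (QB s - (if 1 \<le> s then q ^ (n + 1 - s) * QB (s - 1) else 0))"
    unfolding Rp_def QB_def by (simp add: poly_prod poly_monom)
  have E: "eta0 n s = - (\<Sum>i=1..n. int i) + (2 * int Ts - 2 * int (n * s))"
    unfolding eta0_def Ts_def by (simp add: mult.commute)
  have split: "t powi (eta0 n s) = t powi (- (\<Sum>i=1..n. int i)) * t powi (2 * int Ts - 2 * int (n * s))"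
    unfolding E using power_int_add[of t "- (\<Sum>i=1..n. int i)" "2 * int Ts - 2 * int (n * s)"] t0 by simp
  show ?thesis
    unfolding q_def[symmetric] P F R split by (simp only: mult_ac)
qed

lemma Rp_coeff0:
  assumes sn: "s \<le> n"
  shows "coeff (Rp n s) 0 = 1"
proof -
  have "poly (qbp (2 * n + 1) s) 0 = 1"
    using qbp_coeff0[of s "2 * n + 1"] sn by (simp add: poly_0_coeff_0)
  moreover have "(\<Prod>i=1..n. (0::real) ^ i + 1) = 1" by (intro prod.neutral) auto
  moreover have "(0::real) ^ (n + 1 - s) = 0" using sn by simp
  ultimately have "poly (Rp n s) 0 = 1"
    unfolding Rp_def by (simp add: poly_prod poly_monom)
  thus ?thesis by (simp add: poly_0_coeff_0)
qed

abbreviation Eset :: "nat \<Rightarrow> nat \<Rightarrow> int set" where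
  "Eset n s \<equiv> ang n ` wtK n ` XK n s"

lemma laurent_full:
  assumes sn: "s \<le> n" and t: "t > 0"
  shows "(\<Sum>e\<in>Eset n s. of_int (psc n (lamB n s) e) * t powi e)
       = (\<Sum>e\<in>(\<lambda>k. eta0 n s + 2 * int k) ` {..degree (Rp n s)}.
            coeff (Rp n s) (nat ((e - eta0 n s) div 2)) * t powi e)"
proof -
  have t0: "t \<noteq> 0" using t by simp
  have "(\<Sum>e\<in>Eset n s. of_int (psc n (lamB n s) e) * t powi e) = t powi eta0 n s * poly (Rp n s) (t ^ 2)"
    unfolding laurent_psc[OF sn t] closed_form[OF sn t] ..
  also have "\<dots> = (\<Sum>k\<le>degree (Rp n s). coeff (Rp n s) k * t powi (eta0 n s + 2 * int k))"
    unfolding poly_altdef sum_distrib_left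
  proof (intro sum.cong refl)
    fix k
    show "t powi eta0 n s * (coeff (Rp n s) k * (t ^ 2) ^ k) = coeff (Rp n s) k * t powi (eta0 n s + 2 * int k)"
      unfolding powi_sq[OF t0] using t0 by (simp add: power_int_add)
  qed
  also have "\<dots> = (\<Sum>e\<in>(\<lambda>k. eta0 n s + 2 * int k) ` {..degree (Rp n s)}.
            coeff (Rp n s) (nat ((e - eta0 n s) div 2)) * t powi e)"
    by (subst sum.reindex) (auto simp: inj_on_def)
  finally show ?thesis .
qed

lemma psc_coeffs:
  assumes sn: "s \<le> n"
  shows "(if e \<in> Eset n s then of_int (psc n (lamB n s) e) else 0) =
         (if e \<in> (\<lambda>k. eta0 n s + 2 * int k) ` {..degree (Rp n s)}
          then coeff (Rp n s) (nat ((e - eta0 n s) div 2)) else (0::real))"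
  by (rule laurent_eq) (use laurent_full[OF sn] in auto)

lemma supp_sub: "s \<le> n \<Longrightarrow> {e. psc n (lamB n s) e \<noteq> 0} \<subseteq> Eset n s"
  using psc_support by blast

lemma eta2_val:
  assumes sn: "s \<le> n"
  shows "eta2 n (lamB n s) = eta0 n s"
proof -
  let ?S = "{e. psc n (lamB n s) e \<noteq> 0}"
  have fin: "finite ?S" using supp_sub[OF sn] by (rule finite_subset) simp
  have "eta0 n s \<in> (\<lambda>k. eta0 n s + 2 * int k) ` {..degree (Rp n s)}" by force
  hence "(if eta0 n s \<in> Eset n s then of_int (psc n (lamB n s) (eta0 n s)) else 0) = (1::real)"
    using psc_coeffs[OF sn, of "eta0 n s"] Rp_coeff0[OF sn] by simp
  hence mem: "eta0 n s \<in> ?S" by (auto split: if_splits)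
  have lb: "eta0 n s \<le> e" if "e \<in> ?S" for e
  proof -
    have "e \<in> Eset n s" using that supp_sub[OF sn] by auto
    hence "(if e \<in> (\<lambda>k. eta0 n s + 2 * int k) ` {..degree (Rp n s)}
          then coeff (Rp n s) (nat ((e - eta0 n s) div 2)) else (0::real)) \<noteq> 0"
      using psc_coeffs[OF sn, of e] that by simp
    hence "e \<in> (\<lambda>k. eta0 n s + 2 * int k) ` {..degree (Rp n s)}" by (auto split: if_splits)
    thus ?thesis by auto
  qed
  show ?thesis unfolding eta2_def by (rule Min_eqI[OF fin lb mem])
qed

lemma tps_poly:
  assumes sn: "s \<le> n" and q: "q > 0"
  shows "tps n (lamB n s) q = poly (Rp n s) q"
proof -
  define t where "t = sqrt q"
  have t: "t > 0" unfolding t_def using q by simp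
  have t0: "t \<noteq> 0" using t by simp
  have tq: "t ^ 2 = q" unfolding t_def using q by simp
  let ?S = "{e. psc n (lamB n s) e \<noteq> 0}"
  have pw: "q powr (of_int k / 2) = t powi k" for k :: int
  proof -
    have "q powr (of_int k / 2) = (q powr (1/2)) powr of_int k" by (simp add: powr_powr)
    also have "q powr (1/2) = t" unfolding t_def using q by (simp add: powr_half_sqrt)
    also have "t powr of_int k = t powi k" using t by (simp add: powr_real_of_int')
    finally show ?thesis .
  qed
  have "tps n (lamB n s) q = (\<Sum>e\<in>?S. of_int (psc n (lamB n s) e) * t powi (e - eta0 n s))"
    unfolding tps_def eta2_val[OF sn] pw ..
  also have "\<dots> = t powi (- eta0 n s) * (\<Sum>e\<in>?S. of_int (psc n (lamB n s) e) * t powi e)"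
    unfolding sum_distrib_left
    by (intro sum.cong refl) (use t0 in \<open>simp add: power_int_diff power_int_minus divide_inverse\<close>)
  also have "(\<Sum>e\<in>?S. of_int (psc n (lamB n s) e) * t powi e) = (\<Sum>e\<in>Eset n s. of_int (psc n (lamB n s) e) * t powi e)"
    by (rule sum.mono_neutral_left) (use supp_sub[OF sn] in auto)
  also have "\<dots> = t powi eta0 n s * poly (Rp n s) (t ^ 2)"
    unfolding laurent_psc[OF sn t] closed_form[OF sn t] ..
  also have "t powi (- eta0 n s) * (t powi eta0 n s * poly (Rp n s) (t ^ 2)) = poly (Rp n s) q"
    using t0 tq by (simp add: power_int_minus)
  finally show ?thesis .
qed

lemma Rp_formula:
  assumes sn: "s \<le> n" and q: "q > 0"
  shows "poly (Rp n s) q = qcat (2 * n + 1 - s) s q / (q ^ (n + 1 - s) + 1) * (\<Prod>k=1..n+1. (q ^ k + 1))"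
proof -
  define F where "F = qfact (2 * n + 1) q"
  define m where "m = n + 1 - s"
  have m1: "m \<ge> 1" unfolding m_def using sn by simp
  have qf: "qfact j q > 0" for j using qfact_pos[OF q] .
  have qi: "j \<ge> 1 \<Longrightarrow> qint j q > 0" for j using qint_pos[OF q] .
  have QB: "poly (qbp (2 * n + 1) j) q = F / (qfact j q * qfact (2 * n + 1 - j) q)" if "j \<le> 2 * n + 1" for j
    unfolding F_def by (rule qbp_val[OF q that])
  have PP: "(\<Prod>k=1..n+1. (q ^ k + 1)) = (\<Prod>k=1..n. (q ^ k + 1)) * (q ^ (n + 1) + 1)"
    by (simp add: prod.cl_ivl_Suc)
  have R: "poly (Rp n s) q = (\<Prod>i=1..n. q ^ i + 1) * (poly (qbp (2 * n + 1) s) q -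
      (if 1 \<le> s then q ^ (n + 1 - s) * poly (qbp (2 * n + 1) (s - 1)) q else 0))"
    unfolding Rp_def by (simp add: poly_prod poly_monom)
  have qc: "qcat (2 * n + 1 - s) s q = F * qint (2 * m) q / (qfact s q * qfact (m + (n + 1)) q)"
  proof -
    have e1: "2 * n + 1 - s + s = 2 * n + 1" and e2: "2 * n + 1 - s - s + 1 = 2 * m"
      and e3: "2 * n + 1 - s + 1 = m + (n + 1)"
      using sn unfolding m_def by auto
    show ?thesis unfolding qcat_def F_def by (simp only: e1 e2 e3)
  qed
  have i2m: "qint (2 * m) q = qint m q * (1 + q ^ m)"
  proof -
    have e: "2 * m = m + m" by simp
    show ?thesis unfolding e qint_add by (simp add: algebra_simps)
  qed
  have fmn: "qfact (m + (n + 1)) q = qfact (m + n) q * qint (m + (n + 1)) q"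
    using qfact_Suc[of "m + n" q] by simp
  have imn: "qint (m + (n + 1)) q = qint m q + q ^ m * qint (n + 1) q"
    by (rule qint_add)
  have bracket: "poly (qbp (2 * n + 1) s) q - (if 1 \<le> s then q ^ (n + 1 - s) * poly (qbp (2 * n + 1) (s - 1)) q else 0)
     = F * qint m q * (1 + q ^ (n + 1)) / (qfact s q * qfact (m + (n + 1)) q)"
  proof (cases "s = 0")
    case True
    hence mm: "m = n + 1" unfolding m_def by simp
    have A: "poly (qbp (2 * n + 1) s) q = 1" using True by simp
    have B: "F * qint m q * (1 + q ^ (n + 1)) / (qfact s q * qfact (m + (n + 1)) q) = 1"
    proof -
      have "qfact (m + (n + 1)) q = F * qint (m + (n + 1)) q"
        unfolding F_def mm using qfact_Suc[of "2 * n + 1" q] by (simp add: mult_2)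
      moreover have "qint (m + (n + 1)) q = qint m q * (1 + q ^ (n + 1))"
        by (subst imn) (simp add: mm algebra_simps)
      ultimately have "qfact (m + (n + 1)) q = F * qint m q * (1 + q ^ (n + 1))" by (simp add: mult.assoc)
      moreover have "F \<noteq> 0" using qf[of "2 * n + 1"] unfolding F_def by simp
      moreover have "qint m q \<noteq> 0" using qi[OF m1] by simp
      moreover have "1 + q ^ (n + 1) \<noteq> 0"
      proof -
        have "q ^ (n + 1) > 0" using q by simp
        thus ?thesis by linarith
      qed
      ultimately show ?thesis using True by simp
    qed
    show ?thesis unfolding B using True A by simp
  next
    case False
    hence s1: "s \<ge> 1" by simp
    have a: "2 * n + 1 - s = m + n" unfolding m_def using sn s1 by simp
    have b: "2 * n + 1 - (s - 1) = m + (n + 1)" unfolding m_def using sn s1 by simp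
    have fs: "qfact s q = qfact (s - 1) q * qint s q" using qfact_Suc[of "s - 1" q] s1 by simp
    have ins: "qint (n + 1) q = qint s q + q ^ s * qint m q"
      using qint_add[of s m q] sn unfolding m_def by simp
    have "poly (qbp (2 * n + 1) s) q - q ^ m * poly (qbp (2 * n + 1) (s - 1)) q
       = F / (qfact s q * qfact (m + n) q) - q ^ m * (F / (qfact (s - 1) q * qfact (m + (n + 1)) q))"
      using QB[of s] QB[of "s - 1"] sn unfolding a b by simp
    also have "\<dots> = F * (qint (m + (n + 1)) q - q ^ m * qint s q) / (qfact s q * qfact (m + (n + 1)) q)"
      unfolding fmn fs using qf[of "s - 1"] qf[of "m + n"] qi[of s] qi[of "m + (n + 1)"] s1
      by (simp add: field_simps)
    also have "qint (m + (n + 1)) q - q ^ m * qint s q = qint m q * (1 + q ^ (n + 1))"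
    proof -
      have "q ^ m * q ^ s = q ^ (n + 1)" unfolding m_def using sn by (simp add: power_add[symmetric])
      thus ?thesis unfolding imn ins by (simp add: algebra_simps)
    qed
    finally show ?thesis using s1 unfolding m_def by (simp add: mult.assoc)
  qed
  have pos1: "q ^ m + 1 > 0" using q by (simp add: add_pos_pos)
  have me: "n + 1 - s = m" unfolding m_def ..
  have L: "poly (Rp n s) q = (\<Prod>i=1..n. q ^ i + 1) * (F * qint m q * (1 + q ^ (n + 1)) / (qfact s q * qfact (m + (n + 1)) q))"
    using R bracket by simp
  have RR: "qcat (2 * n + 1 - s) s q / (q ^ (n + 1 - s) + 1) * (\<Prod>k=1..n+1. (q ^ k + 1))
      = F * (qint m q * (1 + q ^ m)) / (qfact s q * qfact (m + (n + 1)) q) / (q ^ m + 1) *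
        ((\<Prod>k=1..n. (q ^ k + 1)) * (q ^ (n + 1) + 1))"
    unfolding qc PP i2m me ..
  have gen: "\<And>P F x B D A::real. A \<noteq> 0 \<Longrightarrow> D \<noteq> 0 \<Longrightarrow> P * (F * x * B / D) = F * (x * A) / D / A * (P * B)"
    by (simp add: field_simps)
  have D0: "qfact s q * qfact (m + (n + 1)) q \<noteq> 0" using qf[of s] qf[of "m + (n + 1)"] by simp
  have A0: "1 + q ^ m \<noteq> 0" using pos1 by simp
  show ?thesis
    unfolding L RR add.commute[of "q ^ m" 1] add.commute[of "q ^ (n + 1)" 1]
    by (rule gen[OF A0 D0])
qed

theorem proposition5p17:
  fixes n s :: nat and q :: real
  assumes "n \<ge> 1" and "s \<le> n" and "q > 0"
  shows "tps n (\<lambda>j. omega2 n n j + omegat2 n s j) q =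
         qcat (2 * n + 1 - s) s q / (q ^ (n + 1 - s) + 1) * (\<Prod>k=1..n+1. (q ^ k + 1))"
  using tps_poly[OF assms(2,3)] Rp_formula[OF assms(2,3)] by simp

end
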